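(* Let $n \ge 1$, let $C_n$ denote the configuration space of $n$ distinct unordered points in $\mathbb{R}^2$, and let $$T = \big([-1,1]\times\{0\}\big) \cup \big(\{0\}\times[0,1]\big) \subset \mathbb{R}^2 .$$ Let $C_n(T) \subset C_n$ be the subspace of configurations all of whose $n$ points lie in $T$, and fix a basepoint configuration $x_0 \in C_n(T)$ whose points all lie on $[-1,1]\times\{0\}$. Then every loop in $C_n$ based at $x_0$ is homotopic, relative to the basepoint, to a loop that stays inside $C_n(T)$. Equivalently, the homomorphism $\pi_1(C_n(T),x_0) \to \pi_1(C_n,x_0) \cong B_n$ induced by the inclusion $C_n(T)\hookrightarrow C_n$ is surjective.
   Context: $C_n=\{\{p_1,\dots,p_n\}\subset\mathbb{R}^2 : p_i\neq p_j \text{ for } i\neq j\}$, topologized as the quotient of the space of ordered $n$-tuples of distinct points of $\mathbb{R}^2$ by the action of the symmetric group $S_n$ permuting the points. A loop in $C_n$ (a "motion" of $n$ points in the plane) describes an $n$-strand braid. $B_n$ denotes the $n$-strand Artin braid group, with presentation $\langle b_1,\dots,b_{n-1} \mid b_ib_{i+1}b_i=b_{i+1}b_ib_{i+1}\ (1\le i\le n-2),\ b_ib_j=b_jb_i\ (|i-j|\ge 2)\rangle$, and $\pi_1(C_n)\cong B_n$. *)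

theory Defs
  imports "HOL-Analysis.Analysis"
begin

definition quotient_topology :: "'a topology \<Rightarrow> ('a \<Rightarrow> 'b) \<Rightarrow> 'b topology" where
  "quotient_topology X f =
     topology (\<lambda>U. U \<subseteq> f ` topspace X \<and> openin X {x \<in> topspace X. f x \<in> U})"

lemma istopology_quotient:
  "istopology (\<lambda>U. U \<subseteq> f ` topspace X \<and> openin X {x \<in> topspace X. f x \<in> U})"
proof -
  have i: "{x \<in> topspace X. f x \<in> S \<inter> T} = {x \<in> topspace X. f x \<in> S} \<inter> {x \<in> topspace X. f x \<in> T}"
    for S T by auto
  have u: "{x \<in> topspace X. f x \<in> \<Union>K} = \<Union>((\<lambda>S. {x \<in> topspace X. f x \<in> S}) ` K)"
    for K by auto
  show ?thesis
    unfolding istopology_def i u by (auto intro!: openin_Union openin_Int)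
qed

lemma openin_quotient_topology:
  "openin (quotient_topology X f) U \<longleftrightarrow>
     U \<subseteq> f ` topspace X \<and> openin X {x \<in> topspace X. f x \<in> U}"
  unfolding quotient_topology_def using istopology_quotient[of f X] by (simp add: topology_inverse')

definition ordered_conf :: "nat \<Rightarrow> (nat \<Rightarrow> real \<times> real) set" where
  "ordered_conf n = {p \<in> PiE {..<n} (\<lambda>_. UNIV). inj_on p {..<n}}"

definition ordered_conf_top :: "nat \<Rightarrow> (nat \<Rightarrow> real \<times> real) topology" where
  "ordered_conf_top n = subtopology (product_topology (\<lambda>_. euclidean) {..<n}) (ordered_conf n)"

text \<open>Unordered configuration space C_n: quotient of ordered configurations
  by the symmetric group, i.e. under the map taking a tuple to its set of points.\<close>
definition conf_space :: "nat \<Rightarrow> (real \<times> real) set topology" where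
  "conf_space n = quotient_topology (ordered_conf_top n) (\<lambda>p. p ` {..<n})"

definition T_graph :: "(real \<times> real) set" where
  "T_graph = {(x, 0) | x. -1 \<le> x \<and> x \<le> 1} \<union> {(0, y) | y. 0 \<le> y \<and> y \<le> 1}"

definition conf_T :: "nat \<Rightarrow> (real \<times> real) set set" where
  "conf_T n = {S \<in> topspace (conf_space n). S \<subseteq> T_graph}"

end

theory Submission
  imports Defs
begin

lemma topspace_quotient_topology:
  "topspace (quotient_topology X f) = f ` topspace X"
proof -
  have "{x \<in> topspace X. f x \<in> f ` topspace X} = topspace X" by auto
  then have "openin (quotient_topology X f) (f ` topspace X)"
    by (auto simp: openin_quotient_topology)
  moreover have "U \<subseteq> f ` topspace X" if "openin (quotient_topology X f) U" for U
    using that by (simp add: openin_quotient_topology)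
  ultimately show ?thesis
    by (metis openin_subset subset_antisym openin_topspace)
qed

lemma continuous_map_quotient:
  "continuous_map X (quotient_topology X f) f"
  unfolding continuous_map_def
  by (auto simp: topspace_quotient_topology openin_quotient_topology)

lemma topspace_ordered_conf_top: "topspace (ordered_conf_top n) = ordered_conf n"
  unfolding ordered_conf_top_def ordered_conf_def by (auto simp: topspace_product_topology)

lemma topspace_conf_space: "topspace (conf_space n) = (\<lambda>p. p ` {..<n}) ` ordered_conf n"
  unfolding conf_space_def by (simp add: topspace_quotient_topology topspace_ordered_conf_top)

lemma cont_ordered:
  assumes "\<And>j. j<n \<Longrightarrow> continuous_map X euclidean (\<lambda>z. P z j)"
    and "\<And>z. z \<in> topspace X \<Longrightarrow> P z \<in> ordered_conf n"
  shows "continuous_map X (ordered_conf_top n) P"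
  unfolding ordered_conf_top_def
  using assms
  by (auto simp: continuous_map_in_subtopology continuous_map_componentwise ordered_conf_def PiE_def)

lemma cont_conf:
  assumes "\<And>j. j<n \<Longrightarrow> continuous_map X euclidean (\<lambda>z. P z j)"
    and "\<And>z. z \<in> topspace X \<Longrightarrow> P z \<in> ordered_conf n"
  shows "continuous_map X (conf_space n) (\<lambda>z. P z ` {..<n})"
proof -
  have "continuous_map X (conf_space n) ((\<lambda>p. p ` {..<n}) \<circ> P)"
    unfolding conf_space_def
    by (rule continuous_map_compose[OF cont_ordered[OF assms] continuous_map_quotient])
  then show ?thesis by (simp add: o_def)
qed

definition sq :: "real \<Rightarrow> real" where "sq x = x / (1 + \<bar>x\<bar>)"
definition sq01 :: "real \<Rightarrow> real" where "sq01 y = (1 + sq y) / 2"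

lemma sq_mono: "x < y \<Longrightarrow> sq x < sq y"
  unfolding sq_def
proof -
  assume "x < y"
  have p1: "0 < 1 + \<bar>x\<bar>" "0 < 1 + \<bar>y\<bar>" by auto
  have "x * (1 + \<bar>y\<bar>) < y * (1 + \<bar>x\<bar>)"
    using \<open>x < y\<close> by (cases "0 \<le> x"; cases "0 \<le> y") (auto simp: algebra_simps abs_if mult_less_cancel_left, (smt (verit) mult_nonneg_nonneg mult_le_0_iff)+)
  then show "x / (1 + \<bar>x\<bar>) < y / (1 + \<bar>y\<bar>)"
    using p1 by (simp add: divide_less_eq less_divide_eq mult.commute)
qed

lemma sq_bound: "\<bar>sq x\<bar> < 1"
  unfolding sq_def by (auto simp: abs_div divide_less_eq)

lemma continuous_on_sq: "continuous_on S sq"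
  unfolding sq_def by (intro continuous_intros) (auto simp: add_pos_nonneg)

lemma sq01_mono: "x < y \<Longrightarrow> sq01 x < sq01 y"
  unfolding sq01_def using sq_mono by auto

lemma sq01_pos: "0 < sq01 y" and sq01_le1: "sq01 y \<le> 1"
  unfolding sq01_def using sq_bound[of y] by auto

lemma continuous_on_sq01: "continuous_on S sq01"
  unfolding sq01_def by (intro continuous_intros continuous_on_sq) auto

lemma sq_mono_diff: "(a - b) * (sq a - sq b) > 0" if "a \<noteq> b"
proof (cases "a < b")
  case True then show ?thesis using sq_mono[OF True] by (simp add: mult_neg_neg)
next
  case False then have "b < a" using that by auto
  then show ?thesis using sq_mono[OF \<open>b < a\<close>] by simp
qed

definition ip :: "real \<times> real \<Rightarrow> real \<times> real \<Rightarrow> real" where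
  "ip a b = fst a * fst b + snd a * snd b"

definition compat :: "nat \<Rightarrow> (nat \<Rightarrow> real \<times> real) \<Rightarrow> (nat \<Rightarrow> real \<times> real) \<Rightarrow> bool" where
  "compat n P Q = (\<forall>i<n. \<forall>k<n. i \<noteq> k \<longrightarrow> ip (P i - P k) (Q i - Q k) > 0)"

definition rk :: "nat \<Rightarrow> (nat \<Rightarrow> real) \<Rightarrow> nat \<Rightarrow> nat" where
  "rk n y j = card {i. i < n \<and> y j < y i}"

definition tt :: "nat \<Rightarrow> (nat \<Rightarrow> real) \<Rightarrow> nat \<Rightarrow> real" where
  "tt n y j = real (rk n y j) + 3/2"

definition wt :: "nat \<Rightarrow> (nat \<Rightarrow> real) \<Rightarrow> nat \<Rightarrow> real \<Rightarrow> real" where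
  "wt n y j \<tau> = max 0 (min 1 (2 - 4 * \<bar>\<tau> - tt n y j\<bar>))"

definition Cf :: "nat \<Rightarrow> (nat \<Rightarrow> real) \<Rightarrow> (nat \<Rightarrow> real) \<Rightarrow> real \<Rightarrow> real" where
  "Cf n x y \<tau> = (\<Sum>i<n. wt n y i \<tau> * sq (x i))"

definition posf :: "nat \<Rightarrow> (nat \<Rightarrow> real) \<Rightarrow> (nat \<Rightarrow> real) \<Rightarrow> real \<Rightarrow> nat \<Rightarrow> real \<Rightarrow> real" where
  "posf n x y lam j \<tau> = (1 - min 1 \<tau>) * sq (x j) + min 1 \<tau> * lam * (sq (x j) - Cf n x y \<tau>)"

definition trj :: "nat \<Rightarrow> (nat \<Rightarrow> real) \<Rightarrow> (nat \<Rightarrow> real) \<Rightarrow> real \<Rightarrow> nat \<Rightarrow> real \<Rightarrow> real \<times> real" where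
  "trj n x y lam j \<tau> = (if \<tau> \<le> tt n y j then (posf n x y lam j \<tau>, 0)
      else (0, sq01 (y j) * min 1 (4 * (\<tau> - tt n y j))))"

definition lamf :: "nat \<Rightarrow> (nat \<Rightarrow> real) \<Rightarrow> (nat \<Rightarrow> real) \<Rightarrow> real" where
  "lamf n x y = Min (insert (1 / (1 + real n))
     {sq01 (y i) * (y i - y k) / ((1 + real n) * (\<bar>x i - x k\<bar> + 1)) | i k. i < n \<and> k < n \<and> y k < y i}) / 2"

definition Tr :: "nat \<Rightarrow> (nat \<Rightarrow> real) \<Rightarrow> (nat \<Rightarrow> real) \<Rightarrow> real \<Rightarrow> nat \<Rightarrow> real \<times> real" where
  "Tr n x y s = restrict (\<lambda>j. trj n x y (lamf n x y) j ((real n + 1) * s)) {..<n}"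

lemma lamf_props:
  shows "0 < lamf n x y" "lamf n x y * (1 + real n) \<le> 1"
    and "\<And>i k. i < n \<Longrightarrow> k < n \<Longrightarrow> y k < y i \<Longrightarrow>
          lamf n x y * (1 + real n) * \<bar>x i - x k\<bar> < sq01 (y i) * (y i - y k)"
proof -
  define E where "E = {sq01 (y i) * (y i - y k) / ((1 + real n) * (\<bar>x i - x k\<bar> + 1)) | i k. i < n \<and> k < n \<and> y k < y i}"
  have finE: "finite E"
  proof -
    have "E \<subseteq> (\<lambda>(i,k). sq01 (y i) * (y i - y k) / ((1 + real n) * (\<bar>x i - x k\<bar> + 1))) ` ({..<n} \<times> {..<n})"
      unfolding E_def by auto
    then show ?thesis by (rule finite_subset) auto
  qed
  have Epos: "\<forall>e\<in>E. 0 < e"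
  proof
    fix e assume "e \<in> E"
    then obtain i k where "e = sq01 (y i) * (y i - y k) / ((1 + real n) * (\<bar>x i - x k\<bar> + 1))" "y k < y i"
      unfolding E_def by blast
    moreover have "0 < (1 + real n) * (\<bar>x i - x k\<bar> + 1)" by (intro mult_pos_pos) auto
    moreover have "0 < sq01 (y i) * (y i - y k)" using sq01_pos \<open>y k < y i\<close> by auto
    ultimately show "0 < e" by simp
  qed
  define M where "M = Min (insert (1 / (1 + real n)) E)"
  have lam: "lamf n x y = M / 2" unfolding lamf_def M_def E_def by simp
  have Mpos: "0 < M" unfolding M_def using finE Epos by (auto simp: Min_gr_iff)
  have Mle: "M \<le> 1 / (1 + real n)" unfolding M_def using finE by auto
  have MleE: "M \<le> e" if "e \<in> E" for e unfolding M_def using finE that by auto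
  show "0 < lamf n x y" using Mpos lam by simp
  show "lamf n x y * (1 + real n) \<le> 1"
  proof -
    have "M * (1 + real n) \<le> 1" using Mle by (simp add: le_divide_eq mult.commute)
    then show ?thesis using lam Mpos
      by (smt (verit, best) divide_le_eq_1 mult_nonneg_nonneg of_nat_0_le_iff times_divide_eq_left)
  qed
  fix i k assume ik: "i < n" "k < n" "y k < y i"
  define d where "d = \<bar>x i - x k\<bar>"
  define s where "s = sq01 (y i) * (y i - y k)"
  have spos: "0 < s" unfolding s_def using ik sq01_pos by auto
  have "M \<le> s / ((1 + real n) * (d + 1))"
    using MleE[of "s / ((1 + real n) * (d + 1))"] ik unfolding E_def s_def d_def by blast
  then have "M * ((1 + real n) * (d + 1)) \<le> s"
    by (simp add: le_divide_eq d_def add_pos_nonneg)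
  then have "M * (1 + real n) * d \<le> s" 
    using Mpos by (smt (verit) d_def mult_nonneg_nonneg of_nat_0_le_iff ring_class.ring_distribs(1) mult.assoc abs_ge_zero)
  moreover have "lamf n x y * (1 + real n) * d = (M * (1 + real n) * d) / 2"
    using lam by simp
  ultimately show "lamf n x y * (1 + real n) * \<bar>x i - x k\<bar> < sq01 (y i) * (y i - y k)"
    using spos unfolding d_def s_def by auto
qed

lemma rk_lt: "j < n \<Longrightarrow> rk n y j < n"
proof -
  assume "j < n"
  have "{i. i < n \<and> y j < y i} \<subseteq> {..<n} - {j}" by auto
  then have "rk n y j \<le> card ({..<n} - {j})" unfolding rk_def by (intro card_mono) auto
  then show ?thesis using \<open>j < n\<close> by simp
qed

lemma rk_less: "i < n \<Longrightarrow> k < n \<Longrightarrow> y k < y i \<Longrightarrow> rk n y i < rk n y k"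
proof -
  assume a: "i < n" "k < n" "y k < y i"
  have "{l. l < n \<and> y i < y l} \<subset> {l. l < n \<and> y k < y l}"
    using a by auto
  then show ?thesis unfolding rk_def by (intro psubset_card_mono) auto
qed

lemma rk_less_iff:
  assumes "inj_on y {..<n}" "i < n" "k < n"
  shows "rk n y i < rk n y k \<longleftrightarrow> y k < y i"
proof
  assume "rk n y i < rk n y k"
  moreover have "i \<noteq> k" using calculation by auto
  moreover have "y i \<noteq> y k" using assms calculation(2) by (auto dest: inj_onD)
  ultimately show "y k < y i" using rk_less[of k n i y] assms by force
qed (use rk_less assms in auto)

lemma tt_sep:
  assumes "inj_on y {..<n}" "i < n" "k < n" "i \<noteq> k"
  shows "1 \<le> \<bar>tt n y i - tt n y k\<bar>"
proof -
  have "y i \<noteq> y k" using assms by (auto dest: inj_onD)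
  then have "rk n y i \<noteq> rk n y k" using rk_less[of i n k y] rk_less[of k n i y] assms by force
  then show ?thesis unfolding tt_def by (cases "rk n y i < rk n y k") auto
qed

lemma tt_ge: "3/2 \<le> tt n y j" unfolding tt_def by simp

lemma tt_le: "j < n \<Longrightarrow> tt n y j \<le> real n + 1/2"
  using rk_lt[of j n y] unfolding tt_def by simp

lemma Cf_at:
  assumes "inj_on y {..<n}" "j < n" "\<bar>\<tau> - tt n y j\<bar> \<le> 1/4"
  shows "Cf n x y \<tau> = sq (x j)"
proof -
  have "wt n y i \<tau> = 0" if "i < n" "i \<noteq> j" for i
  proof -
    have "1 \<le> \<bar>tt n y i - tt n y j\<bar>" using tt_sep assms that by blast
    then have "3/4 \<le> \<bar>\<tau> - tt n y i\<bar>" using assms(3) by linarith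
    then show ?thesis unfolding wt_def by simp
  qed
  moreover have "wt n y j \<tau> = 1" unfolding wt_def using assms(3) by simp
  ultimately show ?thesis unfolding Cf_def
    using assms(2) by (subst sum.remove[of _ j]) (auto intro!: sum.neutral)
qed

lemma Cf_bound: "\<bar>Cf n x y \<tau>\<bar> \<le> real n"
proof -
  have "\<bar>Cf n x y \<tau>\<bar> \<le> (\<Sum>i<n. \<bar>wt n y i \<tau> * sq (x i)\<bar>)" unfolding Cf_def by (rule sum_abs)
  also have "\<dots> \<le> (\<Sum>i<n. 1)"
  proof (rule sum_mono)
    fix i
    have "\<bar>wt n y i \<tau>\<bar> \<le> 1" unfolding wt_def by simp
    moreover have "\<bar>sq (x i)\<bar> \<le> 1" using sq_bound[of "x i"] by simp
    ultimately show "\<bar>wt n y i \<tau> * sq (x i)\<bar> \<le> 1" by (simp add: abs_mult mult_le_one)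
  qed
  finally show ?thesis by simp
qed

lemma continuous_Cf: "continuous_on S (Cf n x y)"
  unfolding Cf_def wt_def by (intro continuous_intros)

lemma continuous_posf: "continuous_on S (posf n x y lam j)"
  unfolding posf_def by (intro continuous_intros continuous_Cf)

lemma posf_at_tt:
  assumes "inj_on y {..<n}" "j < n"
  shows "posf n x y lam j (tt n y j) = 0"
  using Cf_at[OF assms, of "tt n y j" x] tt_ge[of n y j] unfolding posf_def by simp

lemma continuous_trj:
  assumes "inj_on y {..<n}" "j < n"
  shows "continuous_on S (trj n x y lam j)"
proof -
  have "continuous_on UNIV (trj n x y lam j)"
    unfolding trj_def
    by (rule continuous_on_cases_1)
       (auto intro!: continuous_intros continuous_posf simp: posf_at_tt[OF assms])
  then show ?thesis by (rule continuous_on_subset) auto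
qed

lemma posf_bound:
  assumes "0 \<le> \<tau>"
  shows "\<bar>posf n x y (lamf n x y) j \<tau>\<bar> \<le> 1"
proof -
  define m where "m = min 1 \<tau>"
  define l where "l = lamf n x y"
  have m: "0 \<le> m" "m \<le> 1" using assms unfolding m_def by auto
  have l: "0 < l" "l * (1 + real n) \<le> 1" using lamf_props unfolding l_def by auto
  have s: "\<bar>sq (x j)\<bar> \<le> 1" using sq_bound[of "x j"] by simp
  have c: "\<bar>sq (x j) - Cf n x y \<tau>\<bar> \<le> 1 + real n" using s Cf_bound[of n x y \<tau>] by linarith
  have "\<bar>posf n x y l j \<tau>\<bar> \<le> \<bar>(1 - m) * sq (x j)\<bar> + \<bar>m * l * (sq (x j) - Cf n x y \<tau>)\<bar>"
    unfolding posf_def m_def[symmetric] by (rule abs_triangle_ineq)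
  also have "\<bar>(1 - m) * sq (x j)\<bar> = (1 - m) * \<bar>sq (x j)\<bar>" using m by (simp add: abs_mult)
  also have "\<bar>m * l * (sq (x j) - Cf n x y \<tau>)\<bar> = m * (l * \<bar>sq (x j) - Cf n x y \<tau>\<bar>)"
    using m l by (simp add: abs_mult)
  also have "(1 - m) * \<bar>sq (x j)\<bar> \<le> (1 - m) * 1" using m s by (intro mult_left_mono) auto
  also have "l * \<bar>sq (x j) - Cf n x y \<tau>\<bar> \<le> l * (1 + real n)" using l c by (intro mult_left_mono) auto
  also have "m * (l * (1 + real n)) \<le> m * 1" using m l by (intro mult_left_mono) auto
  finally have "\<bar>posf n x y l j \<tau>\<bar> \<le> (1 - m) * 1 + m * 1" using m by (simp add: mult_left_mono)
  then show ?thesis unfolding l_def by simp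
qed

lemma trj_T:
  assumes "0 \<le> \<tau>"
  shows "trj n x y (lamf n x y) j \<tau> \<in> T_graph"
proof (cases "\<tau> \<le> tt n y j")
  case True
  then show ?thesis using posf_bound[OF assms, of n x y j]
    unfolding trj_def T_graph_def by auto
next
  case False
  have "0 \<le> sq01 (y j) * min 1 (4 * (\<tau> - tt n y j))" "sq01 (y j) * min 1 (4 * (\<tau> - tt n y j)) \<le> 1"
    using False sq01_pos[of "y j"] sq01_le1[of "y j"] by (auto intro: mult_le_one)
  then show ?thesis using False unfolding trj_def T_graph_def by auto
qed

lemma ip_swap: "ip (a - b) (c - d) = ip (b - a) (d - c)"
  by (simp add: ip_def algebra_simps)

lemma compat_axax:
  assumes "x i \<noteq> x k" "0 \<le> \<tau>" "\<tau> \<le> tt n y i" "\<tau> \<le> tt n y k"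
  shows "ip ((x i, y i) - (x k, y k)) (trj n x y (lamf n x y) i \<tau> - trj n x y (lamf n x y) k \<tau>) > 0"
proof -
  define m where "m = min 1 \<tau>"
  define l where "l = lamf n x y"
  have m: "0 \<le> m" "m \<le> 1" using assms unfolding m_def by auto
  have l: "0 < l" using lamf_props unfolding l_def by auto
  have c: "0 < (1 - m) + m * l" using m l
    by (cases "m = 0") (auto intro: add_nonneg_pos mult_pos_pos)
  have pd: "posf n x y l i \<tau> - posf n x y l k \<tau> = ((1 - m) + m * l) * (sq (x i) - sq (x k))"
    unfolding posf_def m_def[symmetric] by (simp add: algebra_simps)
  have "ip ((x i, y i) - (x k, y k)) (trj n x y l i \<tau> - trj n x y l k \<tau>)
      = (x i - x k) * (posf n x y l i \<tau> - posf n x y l k \<tau>)"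
    using assms unfolding trj_def ip_def by simp
  also have "\<dots> = ((1 - m) + m * l) * ((x i - x k) * (sq (x i) - sq (x k)))"
    unfolding pd by (simp add: algebra_simps)
  also have "\<dots> > 0" using c sq_mono_diff[OF assms(1)] by simp
  finally show ?thesis unfolding l_def .
qed

lemma compat_legleg:
  assumes "inj_on y {..<n}" "i < n" "k < n" "y k < y i" "tt n y i < \<tau>" "tt n y k < \<tau>"
  shows "ip ((x i, y i) - (x k, y k)) (trj n x y (lamf n x y) i \<tau> - trj n x y (lamf n x y) k \<tau>) > 0"
proof -
  have "rk n y i < rk n y k" using rk_less assms by blast
  then have "tt n y i + 1 \<le> tt n y k" unfolding tt_def by simp
  then have mi: "min 1 (4 * (\<tau> - tt n y i)) = 1" using assms by auto
  have mk: "min 1 (4 * (\<tau> - tt n y k)) \<le> 1" by simp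
  have "sq01 (y k) * min 1 (4 * (\<tau> - tt n y k)) \<le> sq01 (y k)"
    using mk sq01_pos[of "y k"] by (simp add: mult_left_le)
  then have v: "sq01 (y i) - sq01 (y k) * min 1 (4 * (\<tau> - tt n y k)) > 0"
    using sq01_mono[OF assms(4)] by linarith
  have "ip ((x i, y i) - (x k, y k)) (trj n x y (lamf n x y) i \<tau> - trj n x y (lamf n x y) k \<tau>)
     = (y i - y k) * (sq01 (y i) - sq01 (y k) * min 1 (4 * (\<tau> - tt n y k)))"
    using assms mi unfolding trj_def ip_def by simp
  also have "\<dots> > 0" using v assms(4) by simp
  finally show ?thesis .
qed

lemma compat_legax:
  assumes "inj_on y {..<n}" "i < n" "k < n" "x i \<noteq> x k" "tt n y i < \<tau>" "\<tau> \<le> tt n y k"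
  shows "ip ((x i, y i) - (x k, y k)) (trj n x y (lamf n x y) i \<tau> - trj n x y (lamf n x y) k \<tau>) > 0"
proof -
  define l where "l = lamf n x y"
  have l: "0 < l" using lamf_props unfolding l_def by auto
  have "tt n y i < tt n y k" using assms by linarith
  then have "rk n y i < rk n y k" unfolding tt_def by simp
  then have yik: "y k < y i" using rk_less_iff assms by blast
  have ti: "1 \<le> \<tau>" using tt_ge[of n y i] assms by linarith
  have e: "ip ((x i, y i) - (x k, y k)) (trj n x y l i \<tau> - trj n x y l k \<tau>)
     = (x i - x k) * (- posf n x y l k \<tau>) + (y i - y k) * (sq01 (y i) * min 1 (4 * (\<tau> - tt n y i)))"
    using assms unfolding trj_def ip_def by simp
  show ?thesis
  proof (cases "\<tau> \<le> tt n y i + 1/4")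
    case True
    have "Cf n x y \<tau> = sq (x i)" using Cf_at[OF assms(1,2)] True assms(5) by auto
    then have p: "posf n x y l k \<tau> = l * (sq (x k) - sq (x i))" unfolding posf_def using ti by simp
    have "(x i - x k) * (- posf n x y l k \<tau>) = l * ((x i - x k) * (sq (x i) - sq (x k)))"
      unfolding p by (simp add: algebra_simps)
    also have "\<dots> > 0" using l sq_mono_diff[OF assms(4)] by simp
    finally have 1: "(x i - x k) * (- posf n x y l k \<tau>) > 0" .
    have "0 < sq01 (y i) * min 1 (4 * (\<tau> - tt n y i))" using sq01_pos assms(5) by auto
    then have 2: "(y i - y k) * (sq01 (y i) * min 1 (4 * (\<tau> - tt n y i))) > 0" using yik by simp
    show ?thesis using 1 2 e unfolding l_def by linarith
  next
    case False
    then have mi: "min 1 (4 * (\<tau> - tt n y i)) = 1" by auto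
    have p: "posf n x y l k \<tau> = l * (sq (x k) - Cf n x y \<tau>)" unfolding posf_def using ti by simp
    have "\<bar>sq (x k) - Cf n x y \<tau>\<bar> \<le> 1 + real n" using sq_bound[of "x k"] Cf_bound[of n x y \<tau>] by linarith
    then have "\<bar>posf n x y l k \<tau>\<bar> \<le> l * (1 + real n)" unfolding p using l by (simp add: abs_mult)
    then have "\<bar>(x i - x k) * (- posf n x y l k \<tau>)\<bar> \<le> \<bar>x i - x k\<bar> * (l * (1 + real n))"
      by (simp add: abs_mult mult_left_mono)
    moreover have "l * (1 + real n) * \<bar>x i - x k\<bar> < sq01 (y i) * (y i - y k)"
      using lamf_props(3)[OF assms(2,3) yik] unfolding l_def .
    ultimately show ?thesis using e mi unfolding l_def by (simp add: algebra_simps)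
  qed
qed

lemma compat_trj:
  assumes "inj_on x {..<n}" "inj_on y {..<n}" "i < n" "k < n" "i \<noteq> k" "0 \<le> \<tau>"
  shows "ip ((x i, y i) - (x k, y k)) (trj n x y (lamf n x y) i \<tau> - trj n x y (lamf n x y) k \<tau>) > 0"
proof -
  have xi: "x i \<noteq> x k" "x k \<noteq> x i" using assms by (auto dest: inj_onD)
  have yi: "y i \<noteq> y k" using assms by (auto dest: inj_onD)
  consider "\<tau> \<le> tt n y i" "\<tau> \<le> tt n y k" | "tt n y i < \<tau>" "tt n y k < \<tau>"
    | "tt n y i < \<tau>" "\<tau> \<le> tt n y k" | "\<tau> \<le> tt n y i" "tt n y k < \<tau>" by linarith
  then show ?thesis
  proof cases
    case 1 then show ?thesis using compat_axax xi assms by blast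
  next
    case 2 show ?thesis
    proof (cases "y k < y i")
      case True then show ?thesis using compat_legleg 2 assms by blast
    next
      case False then have "y i < y k" using yi by auto
      then show ?thesis using compat_legleg[of y n k i \<tau> x] 2 assms ip_swap by metis
    qed
  next
    case 3 then show ?thesis using compat_legax xi assms by blast
  next
    case 4 then show ?thesis using compat_legax[of y n k i x \<tau>] xi assms ip_swap by metis
  qed
qed

lemma Tr_cont:
  assumes "inj_on y {..<n}" "j < n"
  shows "continuous_on S (\<lambda>s. Tr n x y s j)"
proof -
  have "continuous_on S (\<lambda>s. trj n x y (lamf n x y) j ((real n + 1) * s))"
    by (rule continuous_on_compose2[OF continuous_trj[OF assms, of UNIV]]) (auto intro!: continuous_intros)
  then show ?thesis unfolding Tr_def using assms by simp
qed

lemma Tr_0: "Tr n x y 0 = restrict (\<lambda>j. (sq (x j), 0)) {..<n}"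
proof -
  have "trj n x y (lamf n x y) j 0 = (sq (x j), 0)" for j
  proof -
    have "0 \<le> tt n y j" using tt_ge[of n y j] by linarith
    then show ?thesis unfolding trj_def posf_def by simp
  qed
  then show ?thesis unfolding Tr_def by (auto simp: fun_eq_iff)
qed

lemma Tr_1: "Tr n x y 1 = restrict (\<lambda>j. (0, sq01 (y j))) {..<n}"
proof -
  have "trj n x y (lamf n x y) j (real n + 1) = (0, sq01 (y j))" if "j < n" for j
  proof -
    have "tt n y j \<le> real n + 1/2" using tt_le[OF that] .
    then show ?thesis unfolding trj_def by auto
  qed
  then show ?thesis unfolding Tr_def by (auto simp: fun_eq_iff)
qed

lemma Tr_T: "0 \<le> s \<Longrightarrow> j < n \<Longrightarrow> Tr n x y s j \<in> T_graph"
  unfolding Tr_def using trj_T by simp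

lemma Tr_compat:
  assumes "inj_on x {..<n}" "inj_on y {..<n}" "0 \<le> s"
  shows "compat n (\<lambda>j. (x j, y j)) (Tr n x y s)"
  unfolding compat_def Tr_def using compat_trj[OF assms(1,2)] assms(3) by simp

lemma compat_axis:
  assumes "\<And>i k. i < n \<Longrightarrow> k < n \<Longrightarrow> x k < x i \<Longrightarrow> q k < q i" "inj_on x {..<n}"
  shows "compat n (\<lambda>j. (x j, yy j)) (restrict (\<lambda>j. (q j, 0)) {..<n})"
  unfolding compat_def ip_def
proof (intro allI impI)
  fix i k assume ik: "i < n" "k < n" "i \<noteq> k"
  then have "x i \<noteq> x k" using assms(2) by (auto dest: inj_onD)
  then consider "x k < x i" | "x i < x k" by linarith
  then show "0 < fst ((x i, yy i) - (x k, yy k)) * fst (restrict (\<lambda>j. (q j, 0)) {..<n} i - restrict (\<lambda>j. (q j, 0)) {..<n} k) +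
             snd ((x i, yy i) - (x k, yy k)) * snd (restrict (\<lambda>j. (q j, 0)) {..<n} i - restrict (\<lambda>j. (q j, 0)) {..<n} k)"
  proof cases
    case 1 then show ?thesis using assms(1)[of i k] ik by simp
  next
    case 2 then show ?thesis using assms(1)[of k i] ik by (simp add: mult_neg_neg)
  qed
qed

lemma compat_leg:
  assumes "inj_on y {..<n}"
  shows "compat n (\<lambda>j. (xx j, y j)) (restrict (\<lambda>j. (0, sq01 (y j))) {..<n})"
  unfolding compat_def ip_def
proof (intro allI impI)
  fix i k assume ik: "i < n" "k < n" "i \<noteq> k"
  then have "y i \<noteq> y k" using assms by (auto dest: inj_onD)
  then consider "y k < y i" | "y i < y k" by linarith
  then show "0 < fst ((xx i, y i) - (xx k, y k)) * fst (restrict (\<lambda>j. (0, sq01 (y j))) {..<n} i - restrict (\<lambda>j. (0, sq01 (y j))) {..<n} k) +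
             snd ((xx i, y i) - (xx k, y k)) * snd (restrict (\<lambda>j. (0, sq01 (y j))) {..<n} i - restrict (\<lambda>j. (0, sq01 (y j))) {..<n} k)"
  proof cases
    case 1 then show ?thesis using sq01_mono[OF 1] ik by simp
  next
    case 2 then show ?thesis using sq01_mono[OF 2] ik by (simp add: mult_neg_neg)
  qed
qed

lemma mono_interp1: "0 \<le> s \<Longrightarrow> s \<le> 1 \<Longrightarrow> a < b \<Longrightarrow> (1 - s) * a + s * sq a < (1 - s) * b + s * sq b"
  using sq_mono[of a b]
  by (smt (verit, best) mult_left_mono mult_strict_left_mono)

lemma mono_interp2: "0 \<le> s \<Longrightarrow> s \<le> 1 \<Longrightarrow> a < b \<Longrightarrow> (1 - s) * sq a + s * a < (1 - s) * sq b + s * b"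
  using sq_mono[of a b]
  by (smt (verit, best) mult_left_mono mult_strict_left_mono)

definition idx :: "nat \<Rightarrow> real \<Rightarrow> nat" where
  "idx N t = min (N - 1) (nat \<lfloor>t * real N\<rfloor>)"
definition loc :: "nat \<Rightarrow> real \<Rightarrow> real" where
  "loc N t = t * real N - real (idx N t)"
definition glue :: "nat \<Rightarrow> (nat \<Rightarrow> real \<Rightarrow> 'a) \<Rightarrow> real \<Rightarrow> 'a" where
  "glue N f t = f (idx N t) (loc N t)"

lemma idx_loc:
  assumes "1 \<le> N" "0 \<le> t" "t \<le> 1"
  shows "idx N t < N" "0 \<le> loc N t" "loc N t \<le> 1"
    "real (idx N t) / real N \<le> t" "t \<le> (real (idx N t) + 1) / real N"
proof -
  have N: "0 < real N" using assms by simp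
  have tN: "0 \<le> t * real N" "t * real N \<le> real N" using assms N by (auto simp: mult_le_cancel_right1)
  have fl: "real (nat \<lfloor>t * real N\<rfloor>) \<le> t * real N" "t * real N < real (nat \<lfloor>t * real N\<rfloor>) + 1"
    using tN by (auto simp: of_nat_nat)
  show "idx N t < N" unfolding idx_def using assms by auto
  have c: "real (idx N t) \<le> t * real N \<and> t * real N \<le> real (idx N t) + 1"
  proof (cases "nat \<lfloor>t * real N\<rfloor> \<le> N - 1")
    case True then show ?thesis unfolding idx_def using fl by (simp add: min_def)
  next
    case False
    then have "N \<le> nat \<lfloor>t * real N\<rfloor>" by auto
    then have "real N \<le> t * real N" using fl by (smt (verit) of_nat_le_iff)
    then have "t * real N = real N" using tN by simp
    then show ?thesis unfolding idx_def using False assms by (auto simp: min_def of_nat_diff)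
  qed
  then show "0 \<le> loc N t" "loc N t \<le> 1" unfolding loc_def by auto
  show "real (idx N t) / real N \<le> t" using c N by (simp add: divide_le_eq)
  show "t \<le> (real (idx N t) + 1) / real N" using c N by (simp add: le_divide_eq)
qed

lemma glue_piece:
  assumes "1 \<le> N" "k < N" "real k / real N \<le> t" "t \<le> (real k + 1) / real N"
    and match: "\<And>k. Suc k < N \<Longrightarrow> f k 1 = f (Suc k) 0"
  shows "glue N f t = f k (t * real N - real k)"
proof -
  have N: "0 < real N" using assms by simp
  have a: "real k \<le> t * real N" "t * real N \<le> real k + 1"
    using assms(3,4) N by (auto simp: divide_le_eq le_divide_eq)
  show ?thesis
  proof (cases "t * real N < real k + 1")
    case True
    then have "\<lfloor>t * real N\<rfloor> = int k" using a by (simp add: floor_eq_iff)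
    then have "idx N t = k" unfolding idx_def using assms by auto
    then show ?thesis unfolding glue_def loc_def by simp
  next
    case False
    then have e: "t * real N = real k + 1" using a by simp
    then have fl: "nat \<lfloor>t * real N\<rfloor> = Suc k" by simp
    show ?thesis
    proof (cases "Suc k < N")
      case True
      then have "idx N t = Suc k" unfolding idx_def fl by auto
      then show ?thesis unfolding glue_def loc_def using e match[OF True] by simp
    next
      case False
      then have "idx N t = k" unfolding idx_def fl using assms by auto
      then show ?thesis unfolding glue_def loc_def by simp
    qed
  qed
qed

lemma glue_cont:
  fixes f :: "nat \<Rightarrow> real \<Rightarrow> 'a::topological_space"
  assumes "1 \<le> N" and cont: "\<And>k. k < N \<Longrightarrow> continuous_on {0..1} (f k)"
    and match: "\<And>k. Suc k < N \<Longrightarrow> f k 1 = f (Suc k) 0"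
  shows "continuous_on {0..1} (glue N f)"
proof -
  have N: "0 < real N" using assms by simp
  have U: "{0..1} = (\<Union>k\<in>{..<N}. {real k / real N .. (real k + 1) / real N})"
  proof
    show "{0..1} \<subseteq> (\<Union>k\<in>{..<N}. {real k / real N .. (real k + 1) / real N})"
      using idx_loc[OF assms(1)] by fastforce
    show "(\<Union>k\<in>{..<N}. {real k / real N .. (real k + 1) / real N}) \<subseteq> {0..1}"
    proof
      fix t assume "t \<in> (\<Union>k\<in>{..<N}. {real k / real N .. (real k + 1) / real N})"
      then obtain k where "k \<in> {..<N}" "t \<in> {real k / real N .. (real k + 1) / real N}" by blast
      then have "real k / real N \<le> t" "t \<le> (real k + 1) / real N" "real k + 1 \<le> real N" by auto
      moreover have "(real k + 1) / real N \<le> 1" using calculation(3) N by simp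
      moreover have "0 \<le> real k / real N" by simp
      ultimately show "t \<in> {0..1}" by (meson atLeastAtMost_iff order_trans)
    qed
  qed
  have "continuous_on (\<Union>k\<in>{..<N}. {real k / real N .. (real k + 1) / real N}) (glue N f)"
  proof (rule continuous_on_closed_Union)
    fix k assume k: "k \<in> {..<N}"
    have "continuous_on {real k / real N .. (real k + 1) / real N} (\<lambda>t. f k (t * real N - real k))"
    proof (rule continuous_on_compose2[OF cont])
      show "k < N" using k by simp
      show "continuous_on {real k / real N..(real k + 1) / real N} (\<lambda>t. t * real N - real k)"
        by (intro continuous_intros)
      show "(\<lambda>t. t * real N - real k) ` {real k / real N..(real k + 1) / real N} \<subseteq> {0..1}"
        using N by (auto simp: divide_le_eq le_divide_eq)
    qed
    then show "continuous_on {real k / real N .. (real k + 1) / real N} (glue N f)"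
      by (rule continuous_on_cong[THEN iffD1, rotated 2]) (use glue_piece[of N k _ f] assms(1) match k in auto)
  qed auto
  then show ?thesis using U by simp
qed

lemma glue_0: "glue N f 0 = f 0 0"
  unfolding glue_def idx_def loc_def by simp

lemma glue_1: "1 \<le> N \<Longrightarrow> glue N f 1 = f (N - 1) 1"
  unfolding glue_def idx_def loc_def by (simp add: of_nat_diff)

definition mixc :: "nat \<Rightarrow> real \<Rightarrow> (nat \<Rightarrow> real \<times> real) \<Rightarrow> (nat \<Rightarrow> real \<times> real) \<Rightarrow> nat \<Rightarrow> real \<times> real" where
  "mixc n s P Q = restrict (\<lambda>j. (1 - s) *\<^sub>R P j + s *\<^sub>R Q j) {..<n}"

lemma HL:
  fixes P Q :: "real \<Rightarrow> nat \<Rightarrow> real \<times> real"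
  assumes cP: "\<And>j. j < n \<Longrightarrow> continuous_on {0..1} (\<lambda>t. P t j)"
    and cQ: "\<And>j. j < n \<Longrightarrow> continuous_on {0..1} (\<lambda>t. Q t j)"
    and mixok: "\<And>s t. s \<in> {0..1} \<Longrightarrow> t \<in> {0..1} \<Longrightarrow> mixc n s (P t) (Q t) \<in> ordered_conf n"
    and e0: "\<And>j. j < n \<Longrightarrow> P 0 j = Q 0 j" and e1: "\<And>j. j < n \<Longrightarrow> P 1 j = Q 1 j"
    and b0: "P 0 ` {..<n} = x0" and b1: "P 1 ` {..<n} = x0"
  shows "homotopic_with (\<lambda>k. k 0 = x0 \<and> k 1 = x0) (top_of_set {0..1}) (conf_space n)
           (\<lambda>t. P t ` {..<n}) (\<lambda>t. Q t ` {..<n})"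
proof -
  define H where "H = (\<lambda>z::real\<times>real. mixc n (fst z) (P (snd z)) (Q (snd z)))"
  have X: "prod_topology (top_of_set {0..1::real}) (top_of_set {0..1::real}) = top_of_set ({0..1} \<times> {0..1})"
    by simp
  have "continuous_map (top_of_set ({0..1} \<times> {0..1})) (conf_space n) (\<lambda>z. H z ` {..<n})"
  proof (rule cont_conf)
    fix j assume j: "j < n"
    have "continuous_on ({0..1} \<times> {0..1}) (\<lambda>z. (1 - fst z) *\<^sub>R P (snd z) j + fst z *\<^sub>R Q (snd z) j)"
      by (intro continuous_intros continuous_on_compose2[OF cP[OF j]] continuous_on_compose2[OF cQ[OF j]]) auto
    then show "continuous_map (top_of_set ({0..1} \<times> {0..1})) euclidean (\<lambda>z. H z j)"
      unfolding H_def mixc_def using j by simp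
  next
    fix z assume "z \<in> topspace (top_of_set ({0..1::real} \<times> {0..1::real}))"
    then show "H z \<in> ordered_conf n" unfolding H_def using mixok by (cases z) auto
  qed
  moreover have "H z ` {..<n} = (\<lambda>j. (1 - fst z) *\<^sub>R P (snd z) j + fst z *\<^sub>R Q (snd z) j) ` {..<n}" for z
    unfolding H_def mixc_def by auto
  ultimately have cont: "continuous_map (prod_topology (top_of_set {0..1}) (top_of_set {0..1})) (conf_space n)
     (\<lambda>z. (\<lambda>j. (1 - fst z) *\<^sub>R P (snd z) j + fst z *\<^sub>R Q (snd z) j) ` {..<n})"
    using X by simp
  have pr0: "(\<lambda>j. (1 - s) *\<^sub>R P 0 j + s *\<^sub>R Q 0 j) ` {..<n} = x0 \<and> (\<lambda>j. (1 - s) *\<^sub>R P 1 j + s *\<^sub>R Q 1 j) ` {..<n} = x0" for s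
  proof -
    have "(\<lambda>j. (1 - s) *\<^sub>R P 0 j + s *\<^sub>R Q 0 j) ` {..<n} = P 0 ` {..<n}"
      using e0 by (intro image_cong) (simp_all add: scaleR_collapse)
    moreover have "(\<lambda>j. (1 - s) *\<^sub>R P 1 j + s *\<^sub>R Q 1 j) ` {..<n} = P 1 ` {..<n}"
      using e1 by (intro image_cong) (simp_all add: scaleR_collapse)
    ultimately show ?thesis using b0 b1 by simp
  qed
  show ?thesis unfolding homotopic_with_def
    by (rule exI[where x="\<lambda>z. (\<lambda>j. (1 - fst z) *\<^sub>R P (snd z) j + fst z *\<^sub>R Q (snd z) j) ` {..<n}"])
       (use cont pr0 in auto)
qed

lemma compat_mix:
  assumes "R \<in> ordered_conf n" "compat n R Q" "0 \<le> s" "s \<le> 1"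
  shows "mixc n s R Q \<in> ordered_conf n"
  unfolding ordered_conf_def mixc_def
proof (intro CollectI conjI)
  show "restrict (\<lambda>j. (1 - s) *\<^sub>R R j + s *\<^sub>R Q j) {..<n} \<in> {..<n} \<rightarrow>\<^sub>E UNIV" by simp
  show "inj_on (restrict (\<lambda>j. (1 - s) *\<^sub>R R j + s *\<^sub>R Q j) {..<n}) {..<n}"
  proof (rule inj_onI, rule ccontr)
    fix i k assume ik: "i \<in> {..<n}" "k \<in> {..<n}" "i \<noteq> k"
      and eq: "restrict (\<lambda>j. (1 - s) *\<^sub>R R j + s *\<^sub>R Q j) {..<n} i = restrict (\<lambda>j. (1 - s) *\<^sub>R R j + s *\<^sub>R Q j) {..<n} k"
    define a where "a = R i - R k"
    define b where "b = Q i - Q k"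
    have "a \<noteq> 0" using assms(1) ik unfolding a_def ordered_conf_def by (auto dest: inj_onD)
    then have aa: "ip a a > 0" unfolding ip_def
      by (metis add_pos_nonneg add_nonneg_pos not_real_square_gt_zero prod_eq_iff fst_zero snd_zero
          zero_le_square linorder_neqE_linordered_idom)
    have ab: "ip a b > 0" using assms(2) ik unfolding compat_def a_def b_def by auto
    have "(1 - s) *\<^sub>R a + s *\<^sub>R b = 0" using eq ik unfolding a_def b_def by (simp add: algebra_simps)
    then have "ip a ((1 - s) *\<^sub>R a + s *\<^sub>R b) = 0" by (simp add: ip_def)
    moreover have "ip a ((1 - s) *\<^sub>R a + s *\<^sub>R b) = (1 - s) * ip a a + s * ip a b"
      by (simp add: ip_def algebra_simps)
    moreover have "(1 - s) * ip a a + s * ip a b > 0"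
    proof (cases "s = 0")
      case True then show ?thesis using aa by simp
    next
      case False then have "s > 0" using assms by simp
      then show ?thesis using aa ab assms(4) by (smt (verit) mult_nonneg_nonneg mult_pos_pos)
    qed
    ultimately show False by simp
  qed
qed

lemma box_mix:
  assumes "\<And>j. j < n \<Longrightarrow> P j \<in> B j \<and> Q j \<in> B j" "\<And>j. j < n \<Longrightarrow> convex (B j)"
    "\<And>i k. i < n \<Longrightarrow> k < n \<Longrightarrow> i \<noteq> k \<Longrightarrow> B i \<inter> B k = {}" "0 \<le> s" "s \<le> 1"
  shows "mixc n s P Q \<in> ordered_conf n"
  unfolding ordered_conf_def mixc_def
proof (intro CollectI conjI)
  show "restrict (\<lambda>j. (1 - s) *\<^sub>R P j + s *\<^sub>R Q j) {..<n} \<in> {..<n} \<rightarrow>\<^sub>E UNIV" by simp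
  have m: "(1 - s) *\<^sub>R P j + s *\<^sub>R Q j \<in> B j" if "j < n" for j
    using assms(1)[OF that] assms(2)[OF that] assms(4,5) by (intro convexD) auto
  show "inj_on (restrict (\<lambda>j. (1 - s) *\<^sub>R P j + s *\<^sub>R Q j) {..<n}) {..<n}"
  proof (rule inj_onI, rule ccontr)
    fix i k assume ik: "i \<in> {..<n}" "k \<in> {..<n}" "i \<noteq> k"
      and eq: "restrict (\<lambda>j. (1 - s) *\<^sub>R P j + s *\<^sub>R Q j) {..<n} i = restrict (\<lambda>j. (1 - s) *\<^sub>R P j + s *\<^sub>R Q j) {..<n} k"
    then show False using m[of i] m[of k] assms(3)[of i k] by auto
  qed
qed

definition bx :: "real \<times> real \<Rightarrow> real \<Rightarrow> (real \<times> real) set" where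
  "bx z d = {fst z - d <..< fst z + d} \<times> {snd z - d <..< snd z + d}"

lemma bx_open: "open (bx z d)" unfolding bx_def by (intro open_Times) auto
lemma bx_convex: "convex (bx z d)" unfolding bx_def by (intro convex_Times) auto
lemma bx_center: "0 < d \<Longrightarrow> z \<in> bx z d" unfolding bx_def by (cases z) auto

definition dl :: "(real \<times> real) set \<Rightarrow> real" where
  "dl c = Min (insert 1 {max \<bar>fst a - fst b\<bar> \<bar>snd a - snd b\<bar> | a b. a \<in> c \<and> b \<in> c \<and> a \<noteq> b}) / 2"

lemma dl_props:
  assumes "finite c"
  shows "0 < dl c" "\<And>a b. a \<in> c \<Longrightarrow> b \<in> c \<Longrightarrow> a \<noteq> b \<Longrightarrow> bx a (dl c) \<inter> bx b (dl c) = {}"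
proof -
  define E where "E = {max \<bar>fst a - fst b\<bar> \<bar>snd a - snd b\<bar> | a b. a \<in> c \<and> b \<in> c \<and> a \<noteq> b}"
  have fE: "finite E"
  proof -
    have "E \<subseteq> (\<lambda>(a,b). max \<bar>fst a - fst b\<bar> \<bar>snd a - snd b\<bar>) ` (c \<times> c)" unfolding E_def by force
    then show ?thesis using assms by (meson finite_SigmaI finite_imageI finite_subset)
  qed
  have Epos: "\<forall>e\<in>E. 0 < e" unfolding E_def by (auto simp: prod_eq_iff)
  define M where "M = Min (insert 1 E)"
  have d: "dl c = M / 2" unfolding dl_def M_def E_def by simp
  have M: "0 < M" unfolding M_def using fE Epos by (auto simp: Min_gr_iff)
  show "0 < dl c" using d M by simp
  fix a b assume ab: "a \<in> c" "b \<in> c" "a \<noteq> b"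
  have "max \<bar>fst a - fst b\<bar> \<bar>snd a - snd b\<bar> \<in> E" unfolding E_def using ab by blast
  then have "M \<le> max \<bar>fst a - fst b\<bar> \<bar>snd a - snd b\<bar>" unfolding M_def using fE by (intro Min_le) auto
  then show "bx a (dl c) \<inter> bx b (dl c) = {}" unfolding bx_def d by auto
qed

lemma conf_elem:
  assumes "S \<in> topspace (conf_space n)"
  obtains p where "p \<in> ordered_conf n" "S = p ` {..<n}"
  using assms unfolding topspace_conf_space by auto

lemma conf_card:
  assumes "S \<in> topspace (conf_space n)"
  shows "finite S" "card S = n"
proof -
  obtain p where p: "p \<in> ordered_conf n" "S = p ` {..<n}" using conf_elem[OF assms] .
  show "finite S" using p by simp
  show "card S = n" using p by (simp add: card_image ordered_conf_def)
qed

lemma open_pre: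
  assumes "j < n" "open V0"
  shows "openin (ordered_conf_top n) {p \<in> ordered_conf n. p j \<in> V0}"
proof -
  have "continuous_map (ordered_conf_top n) euclidean (\<lambda>p. p j)"
    unfolding ordered_conf_top_def
    by (rule continuous_map_from_subtopology) (rule continuous_map_product_projection, simp add: assms)
  from openin_continuous_map_preimage[OF this, of V0] assms show ?thesis
    by (simp add: topspace_ordered_conf_top)
qed

lemma openin_conf_space:
  assumes "V \<subseteq> topspace (conf_space n)" "openin (ordered_conf_top n) {p \<in> ordered_conf n. p ` {..<n} \<in> V}"
  shows "openin (conf_space n) V"
  using assms unfolding conf_space_def openin_quotient_topology topspace_quotient_topology
  by (simp add: topspace_ordered_conf_top)

definition UU :: "nat \<Rightarrow> (real \<times> real) set \<Rightarrow> (real \<times> real) set set" where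
  "UU n c = {S \<in> topspace (conf_space n). \<forall>z\<in>c. S \<inter> bx z (dl c) \<noteq> {}}"

lemma W_open:
  assumes "open B"
  shows "openin (conf_space n) {S \<in> topspace (conf_space n). S \<inter> B \<noteq> {}}"
proof (rule openin_conf_space)
  have "{p \<in> ordered_conf n. p ` {..<n} \<in> {S \<in> topspace (conf_space n). S \<inter> B \<noteq> {}}}
      = (\<Union>j\<in>{..<n}. {p \<in> ordered_conf n. p j \<in> B})"
    unfolding topspace_conf_space by auto
  moreover have "openin (ordered_conf_top n) (\<Union>j\<in>{..<n}. {p \<in> ordered_conf n. p j \<in> B})"
    using open_pre assms by auto
  ultimately show "openin (ordered_conf_top n) {p \<in> ordered_conf n. p ` {..<n} \<in> {S \<in> topspace (conf_space n). S \<inter> B \<noteq> {}}}"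
    by simp
qed auto

lemma UU_open:
  assumes "c \<in> topspace (conf_space n)" "1 \<le> n"
  shows "openin (conf_space n) (UU n c)"
proof -
  have c: "finite c" "c \<noteq> {}" using conf_card[OF assms(1)] assms(2) by auto
  have "UU n c = (\<Inter>z\<in>c. {S \<in> topspace (conf_space n). S \<inter> bx z (dl c) \<noteq> {}})"
    unfolding UU_def using c by auto
  also have "openin (conf_space n) \<dots>"
    using c W_open bx_open by (intro openin_INT2) auto
  finally show ?thesis .
qed

lemma UU_self: "c \<in> topspace (conf_space n) \<Longrightarrow> c \<in> UU n c"
  unfolding UU_def using dl_props(1) conf_card bx_center by blast

lemma UU_unique:
  assumes "c \<in> topspace (conf_space n)" "S \<in> UU n c"
  shows "\<And>z. z \<in> c \<Longrightarrow> \<exists>!w. w \<in> S \<and> w \<in> bx z (dl c)"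
    and "\<And>w. w \<in> S \<Longrightarrow> \<exists>z\<in>c. w \<in> bx z (dl c)"
proof -
  have S: "S \<in> topspace (conf_space n)" using assms unfolding UU_def by auto
  have fc: "finite c" "card c = n" using conf_card[OF assms(1)] by auto
  have fS: "finite S" "card S = n" using conf_card[OF S] by auto
  have disj: "\<And>a b. a \<in> c \<Longrightarrow> b \<in> c \<Longrightarrow> a \<noteq> b \<Longrightarrow> bx a (dl c) \<inter> bx b (dl c) = {}"
    using dl_props(2)[OF fc(1)] by blast
  have "\<forall>z\<in>c. \<exists>w. w \<in> S \<and> w \<in> bx z (dl c)" using assms(2) unfolding UU_def by auto
  then obtain f where f: "\<And>z. z \<in> c \<Longrightarrow> f z \<in> S \<and> f z \<in> bx z (dl c)" by metis
  have inj: "inj_on f c"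
  proof (rule inj_onI, rule ccontr)
    fix a b assume "a \<in> c" "b \<in> c" "f a = f b" "a \<noteq> b"
    then show False using f[of a] f[of b] disj[of a b] by auto
  qed
  have "f ` c \<subseteq> S" using f by auto
  moreover have "card (f ` c) = card S" using inj fc fS by (simp add: card_image)
  ultimately have img: "f ` c = S" using fS by (simp add: card_subset_eq)
  show "\<And>w. w \<in> S \<Longrightarrow> \<exists>z\<in>c. w \<in> bx z (dl c)" using img f by blast
  fix z assume z: "z \<in> c"
  show "\<exists>!w. w \<in> S \<and> w \<in> bx z (dl c)"
  proof (rule ex1I[of _ "f z"])
    show "f z \<in> S \<and> f z \<in> bx z (dl c)" using f z by auto
    fix w assume w: "w \<in> S \<and> w \<in> bx z (dl c)"
    then obtain z' where z': "z' \<in> c" "w = f z'" using img by auto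
    then have "w \<in> bx z' (dl c)" using f by auto
    then have "z' = z" using disj[of z' z] z z' w by auto
    then show "w = f z" using z' by simp
  qed
qed

definition zs :: "(real \<times> real) set \<Rightarrow> real \<times> real \<Rightarrow> real \<times> real" where
  "zs c v = (THE z. z \<in> c \<and> v \<in> bx z (dl c))"

lemma zs_props:
  assumes "c \<in> topspace (conf_space n)" "S \<in> UU n c" "v \<in> S"
  shows "zs c v \<in> c" "v \<in> bx (zs c v) (dl c)"
proof -
  have fc: "finite c" using conf_card[OF assms(1)] by auto
  obtain z where z: "z \<in> c" "v \<in> bx z (dl c)" using UU_unique(2)[OF assms] by blast
  have "zs c v = z" unfolding zs_def
  proof (rule the_equality)
    show "z \<in> c \<and> v \<in> bx z (dl c)" using z by simp
    fix z' assume "z' \<in> c \<and> v \<in> bx z' (dl c)"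
    then show "z' = z" using dl_props(2)[OF fc, of z' z] z by auto
  qed
  then show "zs c v \<in> c" "v \<in> bx (zs c v) (dl c)" using z by auto
qed

definition lp :: "nat \<Rightarrow> (real \<Rightarrow> (real \<times> real) set) \<Rightarrow> (real \<times> real) set \<Rightarrow> (nat \<Rightarrow> real \<times> real) \<Rightarrow> real \<Rightarrow> nat \<Rightarrow> real \<times> real" where
  "lp n g c q t = restrict (\<lambda>j. THE w. w \<in> g t \<and> w \<in> bx (zs c (q j)) (dl c)) {..<n}"

lemma lp_props:
  assumes c: "c \<in> topspace (conf_space n)" and q: "q \<in> ordered_conf n" "q ` {..<n} \<in> UU n c"
    and gt: "g t \<in> UU n c"
  shows "lp n g c q t \<in> ordered_conf n" "lp n g c q t ` {..<n} = g t"
    "\<And>j. j < n \<Longrightarrow> lp n g c q t j \<in> bx (zs c (q j)) (dl c)"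
    "\<And>j. j < n \<Longrightarrow> lp n g c q t j \<in> g t"
proof -
  have fc: "finite c" using conf_card[OF c] by auto
  have zc: "zs c (q j) \<in> c" "q j \<in> bx (zs c (q j)) (dl c)" if "j < n" for j
    using zs_props[OF c q(2)] that by auto
  have lpj: "lp n g c q t j \<in> g t \<and> lp n g c q t j \<in> bx (zs c (q j)) (dl c)" if j: "j < n" for j
  proof -
    have "\<exists>!w. w \<in> g t \<and> w \<in> bx (zs c (q j)) (dl c)" using UU_unique(1)[OF c gt zc(1)[OF j]] .
    from theI'[OF this] show ?thesis unfolding lp_def using j by simp
  qed
  show "\<And>j. j < n \<Longrightarrow> lp n g c q t j \<in> bx (zs c (q j)) (dl c)" using lpj by blast
  show "\<And>j. j < n \<Longrightarrow> lp n g c q t j \<in> g t" using lpj by blast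
  have inj: "inj_on (lp n g c q t) {..<n}"
  proof (rule inj_onI, rule ccontr)
    fix i k assume ik: "i \<in> {..<n}" "k \<in> {..<n}" "lp n g c q t i = lp n g c q t k" "i \<noteq> k"
    have qik: "q i \<noteq> q k" using q(1) ik unfolding ordered_conf_def by (auto dest: inj_onD)
    show False
    proof (cases "zs c (q i) = zs c (q k)")
      case True
      have "\<exists>!w. w \<in> q ` {..<n} \<and> w \<in> bx (zs c (q i)) (dl c)"
        using UU_unique(1)[OF c q(2) zc(1)] ik by auto
      then show False using zc(2)[of i] zc(2)[of k] True ik qik by auto
    next
      case False
      then show False using dl_props(2)[OF fc zc(1)[of i] zc(1)[of k]] lpj[of i] lpj[of k] ik by auto
    qed
  qed
  have gts: "g t \<in> topspace (conf_space n)" using gt unfolding UU_def by auto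
  show "lp n g c q t \<in> ordered_conf n" unfolding ordered_conf_def using inj by (simp add: lp_def)
  have "lp n g c q t ` {..<n} \<subseteq> g t" using lpj by auto
  moreover have "card (lp n g c q t ` {..<n}) = card (g t)"
    using inj conf_card[OF gts] by (simp add: card_image)
  ultimately show "lp n g c q t ` {..<n} = g t" using conf_card[OF gts] by (simp add: card_subset_eq)
qed

lemma lp_same:
  assumes c: "c \<in> topspace (conf_space n)" and q: "q \<in> ordered_conf n" "q ` {..<n} \<in> UU n c"
    and gt: "g t = q ` {..<n}"
  shows "lp n g c q t = q"
proof
  fix j
  show "lp n g c q t j = q j"
  proof (cases "j < n")
    case True
    have "\<exists>!w. w \<in> g t \<and> w \<in> bx (zs c (q j)) (dl c)"
      using UU_unique(1)[OF c _ zs_props(1)[OF c q(2)]] q(2) gt True by auto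
    moreover have "q j \<in> g t \<and> q j \<in> bx (zs c (q j)) (dl c)" using zs_props(2)[OF c q(2)] gt True by auto
    ultimately show ?thesis unfolding lp_def using True by (auto intro: the1_equality)
  next
    case False
    then show ?thesis using q(1) unfolding lp_def ordered_conf_def by (auto simp: PiE_def extensional_def)
  qed
qed

lemma lp_cont:
  assumes g: "pathin (conf_space n) g" and I: "I \<subseteq> {0..1}" and gI: "\<And>t. t \<in> I \<Longrightarrow> g t \<in> UU n c"
    and c: "c \<in> topspace (conf_space n)" and q: "q \<in> ordered_conf n" "q ` {..<n} \<in> UU n c" and j: "j < n"
  shows "continuous_on I (\<lambda>t. lp n g c q t j)"
  unfolding continuous_on_open_invariant
proof (intro allI impI)
  fix B :: "(real \<times> real) set" assume B: "open B"
  define z where "z = zs c (q j)"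
  define W where "W = {S \<in> topspace (conf_space n). S \<inter> (bx z (dl c) \<inter> B) \<noteq> {}}"
  have "openin (conf_space n) W" unfolding W_def by (intro W_open open_Int bx_open B)
  then have "openin (top_of_set {0..1}) {t \<in> {0..1}. g t \<in> W}"
    using openin_continuous_map_preimage[OF g[unfolded pathin_def]] by simp
  then obtain A where A: "open A" "{t \<in> {0..1}. g t \<in> W} = {0..1} \<inter> A"
    unfolding openin_open by auto
  have "t \<in> A \<longleftrightarrow> lp n g c q t j \<in> B" if t: "t \<in> I" for t
  proof -
    have tt: "t \<in> {0..1}" using t I by auto
    have gt: "g t \<in> UU n c" using gI t by auto
    have gts: "g t \<in> topspace (conf_space n)" using gt unfolding UU_def by auto
    have lpt: "lp n g c q t j \<in> g t" "lp n g c q t j \<in> bx z (dl c)"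
      using lp_props(3,4)[of c n q g t j] c q gt j unfolding z_def by auto
    have "t \<in> A \<longleftrightarrow> g t \<in> W" using A(2) tt by blast
    also have "\<dots> \<longleftrightarrow> lp n g c q t j \<in> B"
    proof
      assume "g t \<in> W"
      then obtain w where w: "w \<in> g t" "w \<in> bx z (dl c)" "w \<in> B" unfolding W_def by auto
      have "\<exists>!w. w \<in> g t \<and> w \<in> bx z (dl c)"
        using UU_unique(1)[OF c gt] zs_props(1)[OF c q(2)] j unfolding z_def by auto
      then have "w = lp n g c q t j" using w lpt by auto
      then show "lp n g c q t j \<in> B" using w by simp
    next
      assume "lp n g c q t j \<in> B"
      then show "g t \<in> W" unfolding W_def using lpt gts by auto
    qed
    finally show ?thesis .
  qed
  then show "\<exists>A. open A \<and> A \<inter> I = (\<lambda>t. lp n g c q t j) -` B \<inter> I"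
    using A(1) by (intro exI[of _ A]) auto
qed

lemma piece_sub01:
  assumes "k < N" "real k / real N \<le> t" "t \<le> (real k + 1) / real N"
  shows "0 \<le> t" "t \<le> 1"
proof -
  have "0 \<le> real k / real N" by simp
  then show "0 \<le> t" using assms by linarith
  have "real k + 1 \<le> real N" "0 < real N" using assms(1) by auto
  then have "(real k + 1) / real N \<le> 1" by simp
  then show "t \<le> 1" using assms by linarith
qed

lemma leb_pieces:
  assumes g: "pathin (conf_space n) g" and n: "1 \<le> n"
  obtains N cs where "1 \<le> N"
    "\<And>k. k < N \<Longrightarrow> cs k \<in> topspace (conf_space n)"
    "\<And>k t. k < N \<Longrightarrow> t \<in> {real k / real N .. (real k + 1) / real N} \<Longrightarrow> g t \<in> UU n (cs k)"
proof -
  have gc: "continuous_map (top_of_set {0..1}) (conf_space n) g" using g unfolding pathin_def by simp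
  have "\<exists>A. open A \<and> {t \<in> {0..1}. g t \<in> UU n c} = {0..1} \<inter> A" if c: "c \<in> topspace (conf_space n)" for c
  proof -
    have "openin (top_of_set {0..1}) {t \<in> {0..1}. g t \<in> UU n c}"
      using openin_continuous_map_preimage[OF gc UU_open[OF c n]] by simp
    then show ?thesis unfolding openin_open by auto
  qed
  then obtain Af where Af: "\<And>c. c \<in> topspace (conf_space n) \<Longrightarrow> open (Af c) \<and> {t \<in> {0..1}. g t \<in> UU n c} = {0..1} \<inter> Af c"
    by metis
  have g01: "g t \<in> topspace (conf_space n)" if "t \<in> {0..1}" for t
    using gc that by (auto simp: continuous_map_def)
  obtain \<delta> where "0 < \<delta>" and \<delta>: "\<And>T. \<lbrakk>T \<subseteq> {0..1}; diameter T < \<delta>\<rbrakk> \<Longrightarrow> \<exists>B\<in>Af ` topspace (conf_space n). T \<subseteq> B"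
  proof (rule Lebesgue_number_lemma [of "{0..1}" "Af ` topspace (conf_space n)"])
    show "Af ` topspace (conf_space n) \<noteq> {}" using g01[of 0] by auto
    show "{0..1} \<subseteq> \<Union>(Af ` topspace (conf_space n))"
    proof
      fix t :: real assume t: "t \<in> {0..1}"
      have "t \<in> {t \<in> {0..1}. g t \<in> UU n (g t)}" using t UU_self[OF g01[OF t]] by simp
      then have "t \<in> Af (g t)" using Af[OF g01[OF t]] by blast
      then show "t \<in> \<Union>(Af ` topspace (conf_space n))" using g01[OF t] by blast
    qed
    show "\<And>B. B \<in> Af ` topspace (conf_space n) \<Longrightarrow> open B" using Af by auto
  qed auto
  obtain N::nat where N: "N > 1 / \<delta>"
    using reals_Archimedean2 by blast
  then have N0: "N > 0" using \<open>0 < \<delta>\<close> order.asym by force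
  have "\<exists>c. c \<in> topspace (conf_space n) \<and> (\<forall>t\<in>{real k / real N .. (real k + 1) / real N}. g t \<in> UU n c)"
    if k: "k < N" for k
  proof -
    obtain B where B: "B \<in> Af ` topspace (conf_space n)" "{real k / real N .. (real k + 1) / real N} \<subseteq> B"
    proof (rule bexE [OF \<delta>])
      show "{real k / real N .. (real k + 1) / real N} \<subseteq> {0..1}"
        using k by (auto simp: field_split_simps)
      show "diameter {real k / real N .. (real k + 1) / real N} < \<delta>"
        using \<open>0 < \<delta>\<close> N by (auto simp: field_split_simps)
    qed blast
    then obtain c where c: "c \<in> topspace (conf_space n)" "B = Af c" by auto
    have "g t \<in> UU n c" if t: "t \<in> {real k / real N .. (real k + 1) / real N}" for t
    proof -
      have "t \<in> {0..1}" using t k piece_sub01[of k N t] by auto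
      then have "t \<in> {0..1} \<inter> Af c" using B c t by auto
      then show ?thesis using Af[OF c(1)] by blast
    qed
    then show ?thesis using c by blast
  qed
  then obtain cs where "\<And>k. k < N \<Longrightarrow> cs k \<in> topspace (conf_space n) \<and> (\<forall>t\<in>{real k / real N .. (real k + 1) / real N}. g t \<in> UU n (cs k))"
    by metis
  then show ?thesis using that[of N cs] N0 by auto
qed

lemma lift_path:
  assumes g: "pathin (conf_space n) g" and n: "1 \<le> n"
    and p0: "p0 \<in> ordered_conf n" "p0 ` {..<n} = g 0"
  obtains N \<gamma> ctr rad where "1 \<le> N"
    "\<And>j. j < n \<Longrightarrow> continuous_on {0..1} (\<lambda>t. \<gamma> t j)"
    "\<And>t. t \<in> {0..1} \<Longrightarrow> \<gamma> t \<in> ordered_conf n \<and> \<gamma> t ` {..<n} = g t"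
    "\<gamma> 0 = p0"
    "\<And>k. k < N \<Longrightarrow> 0 < rad k"
    "\<And>k i j. k < N \<Longrightarrow> i < n \<Longrightarrow> j < n \<Longrightarrow> i \<noteq> j \<Longrightarrow> bx (ctr k i) (rad k) \<inter> bx (ctr k j) (rad k) = {}"
    "\<And>k t j. k < N \<Longrightarrow> real k / real N \<le> t \<Longrightarrow> t \<le> (real k + 1) / real N \<Longrightarrow> j < n \<Longrightarrow> \<gamma> t j \<in> bx (ctr k j) (rad k)"
proof -
  obtain N cs where N: "1 \<le> N" and cs: "\<And>k. k < N \<Longrightarrow> cs k \<in> topspace (conf_space n)"
    and gU: "\<And>k t. k < N \<Longrightarrow> t \<in> {real k / real N .. (real k + 1) / real N} \<Longrightarrow> g t \<in> UU n (cs k)"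
    using leb_pieces[OF g n] by metis
  have Npos: "0 < real N" using N by simp
  have inpiece: "(real k + s) / real N \<in> {real k / real N .. (real k + 1) / real N}" if "0 \<le> s" "s \<le> 1" for k s
    using that Npos by (auto simp: field_split_simps)
  have lo: "real k / real N \<in> {real k / real N .. (real k + 1) / real N}" for k
    using inpiece[of 0 k] by simp
  have hi: "(real k + 1) / real N \<in> {real k / real N .. (real k + 1) / real N}" for k
    using inpiece[of 1 k] by simp
  define qq where "qq = rec_nat p0 (\<lambda>k q. lp n g (cs k) q ((real k + 1) / real N))"
  have qq0: "qq 0 = p0" unfolding qq_def by simp
  have qqS: "qq (Suc k) = lp n g (cs k) (qq k) ((real k + 1) / real N)" for k unfolding qq_def by simp
  have inv: "qq k \<in> ordered_conf n \<and> qq k ` {..<n} = g (real k / real N)" if "k \<le> N" for k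
    using that
  proof (induction k)
    case 0 then show ?case using qq0 p0 by simp
  next
    case (Suc k)
    then have k: "k < N" by simp
    have a: "g (real k / real N) \<in> UU n (cs k)" using gU[OF k lo] .
    have b: "g ((real k + 1) / real N) \<in> UU n (cs k)" using gU[OF k hi] .
    have IH: "qq k \<in> ordered_conf n" "qq k ` {..<n} = g (real k / real N)" using Suc by auto
    have a': "qq k ` {..<n} \<in> UU n (cs k)" using IH(2) a by simp
    show ?case unfolding qqS using lp_props(1,2)[of "cs k" n "qq k" g "(real k + 1) / real N"] cs[OF k] IH(1) a' b
      by (simp add: add.commute)
  qed
  define f where "f = (\<lambda>k s. lp n g (cs k) (qq k) ((real k + s) / real N))"
  define \<gamma> where "\<gamma> = glue N f"
  have qqU: "qq k ` {..<n} \<in> UU n (cs k)" if k: "k < N" for k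
    using inv[of k] k gU[OF k lo] by auto
  have match: "f k 1 = f (Suc k) 0" if "Suc k < N" for k
  proof -
    have "f k 1 = qq (Suc k)" unfolding f_def qqS by simp
    moreover have "f (Suc k) 0 = qq (Suc k)" unfolding f_def
      using lp_same[OF cs[OF that] _ qqU[OF that]] inv[of "Suc k"] that by simp
    ultimately show ?thesis by simp
  qed
  have piece_eq: "\<gamma> t = lp n g (cs k) (qq k) t" if "k < N" "real k / real N \<le> t" "t \<le> (real k + 1) / real N" for k t
  proof -
    have "\<gamma> t = f k (t * real N - real k)" unfolding \<gamma>_def using glue_piece[OF N that] match by blast
    also have "\<dots> = lp n g (cs k) (qq k) t" unfolding f_def using Npos by (simp add: field_simps)
    finally show ?thesis .
  qed
  have gam_at: "\<exists>k<N. real k / real N \<le> t \<and> t \<le> (real k + 1) / real N" if "t \<in> {0..1}" for t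
    using idx_loc[OF N, of t] that by auto
  show ?thesis
  proof (rule that[of N \<gamma> "\<lambda>k. dl (cs k)" "\<lambda>k j. zs (cs k) (qq k j)"])
    show "1 \<le> N" by (rule N)
    show "\<gamma> 0 = p0" unfolding \<gamma>_def glue_0 f_def using lp_same[OF cs _ qqU, of 0] N inv[of 0] qq0 p0 by simp
  next
    fix j assume j: "j < n"
    have "continuous_on {0..1} (\<lambda>s. f k s j)" if k: "k < N" for k
    proof -
      have "continuous_on {real k / real N .. (real k + 1) / real N} (\<lambda>t. lp n g (cs k) (qq k) t j)"
      proof (rule lp_cont[OF g _ _ cs[OF k] _ qqU[OF k] j])
        show "{real k / real N..(real k + 1) / real N} \<subseteq> {0..1}" using piece_sub01[OF k] by auto
        show "qq k \<in> ordered_conf n" using inv[of k] k by auto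
      qed (use gU[OF k] in auto)
      then show ?thesis unfolding f_def
        by (rule continuous_on_compose2) (use N inpiece in \<open>auto intro!: continuous_intros\<close>)
    qed
    then have "continuous_on {0..1} (glue N (\<lambda>k s. f k s j))"
      using match by (intro glue_cont[OF N]) auto
    then show "continuous_on {0..1} (\<lambda>t. \<gamma> t j)" unfolding \<gamma>_def glue_def by simp
  next
    fix t :: real assume t: "t \<in> {0..1}"
    then obtain k where k: "k < N" "real k / real N \<le> t" "t \<le> (real k + 1) / real N" using gam_at by blast
    show "\<gamma> t \<in> ordered_conf n \<and> \<gamma> t ` {..<n} = g t"
      unfolding piece_eq[OF k] using lp_props(1,2)[of "cs k" n "qq k" g t] cs[OF k(1)] qqU[OF k(1)] gU[OF k(1), of t] inv[of k] k by auto
  next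
    fix k assume "k < N" then show "0 < dl (cs k)" using dl_props(1) conf_card cs by blast
  next
    fix k i j assume kij: "k < N" "i < n" "j < n" "i \<noteq> j"
    have fc: "finite (cs k)" using conf_card cs kij by blast
    have z: "zs (cs k) (qq k i) \<in> cs k" "qq k i \<in> bx (zs (cs k) (qq k i)) (dl (cs k))"
            "zs (cs k) (qq k j) \<in> cs k" "qq k j \<in> bx (zs (cs k) (qq k j)) (dl (cs k))"
      using zs_props[OF cs[OF kij(1)] qqU[OF kij(1)]] kij by auto
    have "qq k i \<noteq> qq k j" using inv[of k] kij unfolding ordered_conf_def by (auto dest: inj_onD)
    moreover have "\<exists>!w. w \<in> qq k ` {..<n} \<and> w \<in> bx (zs (cs k) (qq k i)) (dl (cs k))"
      using UU_unique(1)[OF cs[OF kij(1)] qqU[OF kij(1)] z(1)] .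
    ultimately have "zs (cs k) (qq k i) \<noteq> zs (cs k) (qq k j)"
    proof (intro notI)
      assume ne: "qq k i \<noteq> qq k j" and u: "\<exists>!w. w \<in> qq k ` {..<n} \<and> w \<in> bx (zs (cs k) (qq k i)) (dl (cs k))"
        and e: "zs (cs k) (qq k i) = zs (cs k) (qq k j)"
      have "qq k i \<in> qq k ` {..<n}" "qq k j \<in> qq k ` {..<n}" using kij by auto
      moreover have "qq k j \<in> bx (zs (cs k) (qq k i)) (dl (cs k))" using z(4) e by simp
      ultimately show False using u ne z(2) by (metis (no_types, lifting))
    qed
    then show "bx (zs (cs k) (qq k i)) (dl (cs k)) \<inter> bx (zs (cs k) (qq k j)) (dl (cs k)) = {}"
      using dl_props(2)[OF fc] z by blast
  next
    fix k t j assume a: "k < N" "real k / real N \<le> t" "t \<le> (real k + 1) / real N" "j < n"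
    show "\<gamma> t j \<in> bx (zs (cs k) (qq k j)) (dl (cs k))"
      unfolding piece_eq[OF a(1-3)] using lp_props(3)[of "cs k" n "qq k" g t j] cs[OF a(1)] qqU[OF a(1)] gU[OF a(1), of t] inv[of k] a by auto
  qed
qed

lemma pick_distinct:
  assumes "\<And>j. j < n \<Longrightarrow> (a j :: real) < b j"
  shows "\<exists>x::nat \<Rightarrow> real. inj_on x {..<n} \<and> (\<forall>j<n. a j < x j \<and> x j < b j)"
  using assms
proof (induction n)
  case 0 then show ?case by auto
next
  case (Suc n)
  then obtain x where x: "inj_on x {..<n}" "\<forall>j<n. a j < x j \<and> x j < b j" by auto
  have "a n < b n" using Suc.prems by auto
  then have "infinite ({a n<..<b n} - x ` {..<n})" using infinite_Ioo by (simp add: Diff_infinite_finite)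
  then obtain v where "v \<in> {a n<..<b n} - x ` {..<n}" by (metis ex_in_conv finite.emptyI)
  then have v: "v \<in> {a n<..<b n}" "v \<notin> x ` {..<n}" by auto
  define x' where "x' = x(n := v)"
  have "inj_on x' {..<Suc n}"
    unfolding x'_def using x(1) v(2) by (auto simp: inj_on_def lessThan_Suc)
  moreover have "\<forall>j<Suc n. a j < x' j \<and> x' j < b j" unfolding x'_def using x(2) v(1) by (auto simp: less_Suc_eq)
  ultimately show ?case by blast
qed

lemma compat_restrict: "compat n P (restrict Q {..<n}) = compat n P Q"
  by (simp add: compat_def)

lemma compat_axis2:
  assumes "\<And>i k. i < n \<Longrightarrow> k < n \<Longrightarrow> x k < x i \<Longrightarrow> q k < q i" "inj_on x {..<n}"
  shows "compat n (\<lambda>j. (x j, yy j)) (\<lambda>j. (q j, 0))"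
  using compat_axis[where n=n and x=x and q=q and yy=yy] assms compat_restrict[of n _ "\<lambda>j. (q j, 0)"] by simp

lemma compat_leg2:
  assumes "inj_on y {..<n}"
  shows "compat n (\<lambda>j. (xx j, y j)) (\<lambda>j. (0, sq01 (y j)))"
  using compat_leg[where n=n and y=y and xx=xx] assms compat_restrict[of n _ "\<lambda>j. (0, sq01 (y j))"] by simp

lemma compat_inj:
  assumes "compat n P Q"
  shows "inj_on Q {..<n}"
proof (rule inj_onI, rule ccontr)
  fix i k assume a: "i \<in> {..<n}" "k \<in> {..<n}" "Q i = Q k" "i \<noteq> k"
  have "ip (P i - P k) (Q i - Q k) > 0" using assms a(1,2,4) unfolding compat_def by blast
  then show False using a(3) by (simp add: ip_def)
qed

lemma compat_cong:
  assumes "compat n P Q" "\<And>j. j < n \<Longrightarrow> P' j = P j" "\<And>j. j < n \<Longrightarrow> Q' j = Q j"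
  shows "compat n P' Q'"
  using assms unfolding compat_def by auto

lemma conv_in:
  assumes "a \<in> {l<..<u}" "b \<in> {l<..<u}" "0 \<le> s" "s \<le> 1"
  shows "(1 - s) * a + s * b \<in> {l<..<u::real}"
proof -
  have "convex {l<..<u}" by simp
  then have "(1 - s) *\<^sub>R a + s *\<^sub>R b \<in> {l<..<u}" using assms by (intro convexD) auto
  then show ?thesis by simp
qed

definition Rc :: "(nat \<Rightarrow> nat \<Rightarrow> real \<times> real) \<Rightarrow> (nat \<Rightarrow> nat \<Rightarrow> real) \<Rightarrow> nat \<Rightarrow> nat \<Rightarrow> real \<Rightarrow> nat \<Rightarrow> real \<times> real" where
  "Rc w ys k ph s j =
    (if ph = 0 then (fst (w k j), (1 - s) * snd (w k j) + s * ys k j)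
     else if ph = 1 then (fst (w k j), ys k j)
     else if ph = 2 then ((1 - s) * fst (w k j) + s * fst (w (Suc k) j), ys k j)
     else if ph = 3 then (fst (w (Suc k) j), ys k j)
     else (fst (w (Suc k) j), (1 - s) * ys k j + s * snd (w (Suc k) j)))"

definition Qc :: "nat \<Rightarrow> nat \<Rightarrow> (nat \<Rightarrow> nat \<Rightarrow> real \<times> real) \<Rightarrow> (nat \<Rightarrow> nat \<Rightarrow> real) \<Rightarrow> nat \<Rightarrow> nat \<Rightarrow> real \<Rightarrow> nat \<Rightarrow> real \<times> real" where
  "Qc n N w ys k ph s j =
    (if ph = 0 then (if k = 0 then ((1 - s) * fst (w k j) + s * sq (fst (w k j)), 0) else (sq (fst (w k j)), 0))
     else if ph = 1 then Tr n (\<lambda>i. fst (w k i)) (ys k) s j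
     else if ph = 2 then (0, sq01 (ys k j))
     else if ph = 3 then Tr n (\<lambda>i. fst (w (Suc k) i)) (ys k) (1 - s) j
     else (if Suc k = N then ((1 - s) * sq (fst (w (Suc k) j)) + s * fst (w (Suc k) j), 0)
           else (sq (fst (w (Suc k) j)), 0)))"

definition Rp :: "nat \<Rightarrow> nat \<Rightarrow> (nat \<Rightarrow> nat \<Rightarrow> real \<times> real) \<Rightarrow> (nat \<Rightarrow> nat \<Rightarrow> real) \<Rightarrow> real \<Rightarrow> nat \<Rightarrow> real \<times> real" where
  "Rp n N w ys t = restrict (\<lambda>j. glue N (\<lambda>k s. glue 5 (\<lambda>ph r. Rc w ys k ph r j) s) t) {..<n}"

definition Qp :: "nat \<Rightarrow> nat \<Rightarrow> (nat \<Rightarrow> nat \<Rightarrow> real \<times> real) \<Rightarrow> (nat \<Rightarrow> nat \<Rightarrow> real) \<Rightarrow> real \<Rightarrow> nat \<Rightarrow> real \<times> real" where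
  "Qp n N w ys t = restrict (\<lambda>j. glue N (\<lambda>k s. glue 5 (\<lambda>ph r. Qc n N w ys k ph r j) s) t) {..<n}"

definition good :: "nat \<Rightarrow> nat \<Rightarrow> (nat \<Rightarrow> nat \<Rightarrow> real \<times> real) \<Rightarrow> (nat \<Rightarrow> nat \<Rightarrow> real)
    \<Rightarrow> (nat \<Rightarrow> nat \<Rightarrow> real \<times> real) \<Rightarrow> (nat \<Rightarrow> real) \<Rightarrow> bool" where
  "good n N w ys ctr rad \<longleftrightarrow> 1 \<le> N \<and>
     (\<forall>k\<le>N. inj_on (\<lambda>j. fst (w k j)) {..<n}) \<and>
     (\<forall>k<N. inj_on (ys k) {..<n}) \<and>
     (\<forall>k<N. \<forall>j<n. w k j \<in> bx (ctr k j) (rad k) \<and> w (Suc k) j \<in> bx (ctr k j) (rad k) \<and>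
         ys k j \<in> {snd (ctr k j) - rad k <..< snd (ctr k j) + rad k}) \<and>
     (\<forall>j<n. snd (w 0 j) = 0 \<and> fst (w 0 j) \<in> {-1..1} \<and> snd (w N j) = 0 \<and> fst (w N j) \<in> {-1..1})"

lemma Rc_cell:
  assumes "good n N w ys ctr rad" "k < N" "j < n" "0 \<le> s" "s \<le> 1"
  shows "Rc w ys k ph s j \<in> bx (ctr k j) (rad k)"
proof -
  have a: "w k j \<in> bx (ctr k j) (rad k)" "w (Suc k) j \<in> bx (ctr k j) (rad k)"
     "ys k j \<in> {snd (ctr k j) - rad k <..< snd (ctr k j) + rad k}"
    using assms unfolding good_def by auto
  then have b: "fst (w k j) \<in> {fst (ctr k j) - rad k <..< fst (ctr k j) + rad k}"
    "snd (w k j) \<in> {snd (ctr k j) - rad k <..< snd (ctr k j) + rad k}"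
    "fst (w (Suc k) j) \<in> {fst (ctr k j) - rad k <..< fst (ctr k j) + rad k}"
    "snd (w (Suc k) j) \<in> {snd (ctr k j) - rad k <..< snd (ctr k j) + rad k}"
    unfolding bx_def by (auto simp: mem_Times_iff)
  show ?thesis unfolding Rc_def bx_def mem_Times_iff
    using b a(3) conv_in[OF b(2) a(3) assms(4,5)] conv_in[OF b(1) b(3) assms(4,5)]
      conv_in[OF a(3) b(4) assms(4,5)] by auto
qed

lemma Qc_T:
  assumes "good n N w ys ctr rad" "k < N" "j < n" "0 \<le> s" "s \<le> 1"
  shows "Qc n N w ys k ph s j \<in> T_graph"
proof -
  have sqT: "(sq a, 0) \<in> T_graph" for a using sq_bound[of a] unfolding T_graph_def by auto
  have e0: "fst (w 0 j) \<in> {-1..1}" "fst (w N j) \<in> {-1..1}" using assms unfolding good_def by auto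
  have i1: "(1 - s) * a + s * b \<in> {-1..1}" if "a \<in> {-1..1}" "b \<in> {-1..1}" for a b :: real
  proof -
    have "convex {-1..1::real}" by simp
    then have "(1 - s) *\<^sub>R a + s *\<^sub>R b \<in> {-1..1}" using assms that by (intro convexD) auto
    then show ?thesis by simp
  qed
  have sqi: "sq a \<in> {-1..1}" for a using sq_bound[of a] by auto
  have leg: "(0, sq01 y) \<in> T_graph" for y using sq01_pos[of y] sq01_le1[of y] unfolding T_graph_def by auto
  consider "ph = 0" | "ph = 1" | "ph = 2" | "ph = 3" | "ph \<noteq> 0 \<and> ph \<noteq> 1 \<and> ph \<noteq> 2 \<and> ph \<noteq> 3" by blast
  then show ?thesis
  proof cases
    case 1
    show ?thesis
    proof (cases "k = 0")
      case True
      have "(1 - s) * fst (w k j) + s * sq (fst (w k j)) \<in> {-1..1}" using i1 e0 sqi True by simp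
      then show ?thesis using 1 True unfolding Qc_def T_graph_def by auto
    qed (use 1 sqT in \<open>simp add: Qc_def\<close>)
  next
    case 2 then show ?thesis unfolding Qc_def using Tr_T assms by simp
  next
    case 3 then show ?thesis unfolding Qc_def using leg by simp
  next
    case 4 then show ?thesis unfolding Qc_def using Tr_T assms by simp
  next
    case 5
    show ?thesis
    proof (cases "Suc k = N")
      case True
      have "(1 - s) * sq (fst (w (Suc k) j)) + s * fst (w (Suc k) j) \<in> {-1..1}" using i1 e0 sqi True by simp
      then show ?thesis using 5 True unfolding Qc_def T_graph_def by auto
    qed (use 5 sqT in \<open>simp add: Qc_def\<close>)
  qed
qed

lemma Qc_compat:
  assumes "good n N w ys ctr rad" "k < N" "0 \<le> s" "s \<le> 1"
  shows "compat n (\<lambda>j. Rc w ys k ph s j) (\<lambda>j. Qc n N w ys k ph s j)"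
proof -
  have ik: "inj_on (\<lambda>j. fst (w k j)) {..<n}" "inj_on (\<lambda>j. fst (w (Suc k) j)) {..<n}" "inj_on (ys k) {..<n}"
    using assms unfolding good_def by auto
  have m1: "(1 - s) * a + s * sq a < (1 - s) * b + s * sq b" if "a < b" for a b using mono_interp1 assms that by blast
  have m2: "(1 - s) * sq a + s * a < (1 - s) * sq b + s * b" if "a < b" for a b using mono_interp2 assms that by blast
  consider "ph = 0" | "ph = 1" | "ph = 2" | "ph = 3" | "ph \<noteq> 0 \<and> ph \<noteq> 1 \<and> ph \<noteq> 2 \<and> ph \<noteq> 3" by blast
  then show ?thesis
  proof cases
    case 1
    show ?thesis
    proof (cases "k = 0")
      case True
      have "compat n (\<lambda>j. (fst (w k j), (1 - s) * snd (w k j) + s * ys k j))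
          (\<lambda>j. ((1 - s) * fst (w k j) + s * sq (fst (w k j)), 0))"
        by (rule compat_axis2[OF _ ik(1)]) (use m1 in auto)
      then show ?thesis using 1 True unfolding Rc_def Qc_def by simp
    next
      case False
      have "compat n (\<lambda>j. (fst (w k j), (1 - s) * snd (w k j) + s * ys k j)) (\<lambda>j. (sq (fst (w k j)), 0))"
        by (rule compat_axis2[OF _ ik(1)]) (use sq_mono in auto)
      then show ?thesis using 1 False unfolding Rc_def Qc_def by simp
    qed
  next
    case 2
    have "compat n (\<lambda>j. (fst (w k j), ys k j)) (Tr n (\<lambda>i. fst (w k i)) (ys k) s)"
      using Tr_compat[OF ik(1) ik(3) assms(3)] .
    then show ?thesis using 2 unfolding Rc_def Qc_def by simp
  next
    case 3
    have "compat n (\<lambda>j. ((1 - s) * fst (w k j) + s * fst (w (Suc k) j), ys k j)) (\<lambda>j. (0, sq01 (ys k j)))"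
      using compat_leg2[OF ik(3)] .
    then show ?thesis using 3 unfolding Rc_def Qc_def by simp
  next
    case 4
    have "compat n (\<lambda>j. (fst (w (Suc k) j), ys k j)) (Tr n (\<lambda>i. fst (w (Suc k) i)) (ys k) (1 - s))"
      using Tr_compat[OF ik(2) ik(3)] assms by simp
    then show ?thesis using 4 unfolding Rc_def Qc_def by simp
  next
    case 5
    show ?thesis
    proof (cases "Suc k = N")
      case True
      have "compat n (\<lambda>j. (fst (w (Suc k) j), (1 - s) * ys k j + s * snd (w (Suc k) j)))
          (\<lambda>j. ((1 - s) * sq (fst (w (Suc k) j)) + s * fst (w (Suc k) j), 0))"
        by (rule compat_axis2[OF _ ik(2)]) (use m2 in auto)
      then show ?thesis using 5 True unfolding Rc_def Qc_def by simp
    next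
      case False
      have "compat n (\<lambda>j. (fst (w (Suc k) j), (1 - s) * ys k j + s * snd (w (Suc k) j))) (\<lambda>j. (sq (fst (w (Suc k) j)), 0))"
        by (rule compat_axis2[OF _ ik(2)]) (use sq_mono in auto)
      then show ?thesis using 5 False unfolding Rc_def Qc_def by simp
    qed
  qed
qed

lemma Rp_cont:
  assumes "good n N w ys ctr rad" "j < n"
  shows "continuous_on {0..1} (\<lambda>t. Rp n N w ys t j)"
proof -
  have N: "1 \<le> N" using assms unfolding good_def by auto
  have inner: "continuous_on {0..1} (glue 5 (\<lambda>ph r. Rc w ys k ph r j))" for k
  proof (rule glue_cont)
    fix ph :: nat
    have "ph = 0 \<or> ph = 1 \<or> ph = 2 \<or> ph = 3 \<or> (ph \<noteq> 0 \<and> ph \<noteq> 1 \<and> ph \<noteq> 2 \<and> ph \<noteq> 3)" by auto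
    then show "continuous_on {0..1} (\<lambda>r. Rc w ys k ph r j)"
      by (elim disjE) (simp_all add: Rc_def, (intro continuous_intros)+)
  next
    fix ph :: nat assume "Suc ph < 5"
    then have "ph = 0 \<or> ph = 1 \<or> ph = 2 \<or> ph = 3" by auto
    then show "Rc w ys k ph 1 j = Rc w ys k (Suc ph) 0 j"
      by (elim disjE) (simp_all add: Rc_def)
  qed simp
  have "continuous_on {0..1} (glue N (\<lambda>k s. glue 5 (\<lambda>ph r. Rc w ys k ph r j) s))"
  proof (rule glue_cont[OF N])
    fix k show "continuous_on {0..1} (glue 5 (\<lambda>ph r. Rc w ys k ph r j))" by (rule inner)
  next
    fix k assume "Suc k < N"
    show "glue 5 (\<lambda>ph r. Rc w ys k ph r j) 1 = glue 5 (\<lambda>ph r. Rc w ys (Suc k) ph r j) 0"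
      by (simp add: glue_1 glue_0 Rc_def)
  qed
  then show ?thesis unfolding Rp_def using assms(2) by simp
qed

lemma Qp_cont:
  assumes "good n N w ys ctr rad" "j < n"
  shows "continuous_on {0..1} (\<lambda>t. Qp n N w ys t j)"
proof -
  have N: "1 \<le> N" using assms unfolding good_def by auto
  have inner: "continuous_on {0..1} (glue 5 (\<lambda>ph r. Qc n N w ys k ph r j))" if k: "k < N" for k
  proof (rule glue_cont)
    have iy: "inj_on (ys k) {..<n}" using assms k unfolding good_def by auto
    fix ph :: nat
    have c1: "continuous_on {0..1} (\<lambda>r. Tr n x (ys k) r j)" for x using Tr_cont[OF iy assms(2)] .
    have c2: "continuous_on {0..1} (\<lambda>r. Tr n x (ys k) (1 - r) j)" for x
    proof -
      have u: "continuous_on UNIV (\<lambda>r. Tr n x (ys k) r j)" using Tr_cont[OF iy assms(2)] .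
      have "continuous_on {0..1::real} (\<lambda>r. 1 - r)" by (intro continuous_intros)
      from continuous_on_compose2[OF u this] show ?thesis by simp
    qed
    have "ph = 0 \<or> ph = 1 \<or> ph = 2 \<or> ph = 3 \<or> (ph \<noteq> 0 \<and> ph \<noteq> 1 \<and> ph \<noteq> 2 \<and> ph \<noteq> 3)" by auto
    then show "continuous_on {0..1} (\<lambda>r. Qc n N w ys k ph r j)"
      using c1 c2 by (elim disjE; cases "k = 0"; cases "Suc k = N") (simp_all add: Qc_def, (intro continuous_intros)+)
  next
    fix ph :: nat assume ph: "Suc ph < 5"
    have T0: "Tr n x y 0 j = (sq (x j), 0)" for x y using Tr_0 assms(2) by simp
    have T1: "Tr n x y 1 j = (0, sq01 (y j))" for x y using Tr_1 assms(2) by simp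
    have "ph = 0 \<or> ph = 1 \<or> ph = 2 \<or> ph = 3" using ph by auto
    then show "Qc n N w ys k ph 1 j = Qc n N w ys k (Suc ph) 0 j"
      by (elim disjE) (simp_all add: Qc_def T0 T1)
  qed simp
  have "continuous_on {0..1} (glue N (\<lambda>k s. glue 5 (\<lambda>ph r. Qc n N w ys k ph r j) s))"
  proof (rule glue_cont[OF N])
    fix k assume "k < N" then show "continuous_on {0..1} (glue 5 (\<lambda>ph r. Qc n N w ys k ph r j))" by (rule inner)
  next
    fix k assume "Suc k < N"
    then show "glue 5 (\<lambda>ph r. Qc n N w ys k ph r j) 1 = glue 5 (\<lambda>ph r. Qc n N w ys (Suc k) ph r j) 0"
      by (simp add: glue_1 glue_0 Qc_def)
  qed
  then show ?thesis unfolding Qp_def using assms(2) by simp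
qed

lemma RQ_at:
  assumes "good n N w ys ctr rad" "t \<in> {0..1}"
  obtains k ph r where "k < N" "real k / real N \<le> t" "t \<le> (real k + 1) / real N" "0 \<le> r" "r \<le> 1"
    "\<And>j. j < n \<Longrightarrow> Rp n N w ys t j = Rc w ys k ph r j \<and> Qp n N w ys t j = Qc n N w ys k ph r j"
proof -
  have N: "1 \<le> N" using assms unfolding good_def by auto
  define k where "k = idx N t"
  define s where "s = loc N t"
  have k: "k < N" "real k / real N \<le> t" "t \<le> (real k + 1) / real N" "0 \<le> s" "s \<le> 1"
    using idx_loc[OF N, of t] assms(2) unfolding k_def s_def by auto
  define ph where "ph = idx 5 s"
  define r where "r = loc 5 s"
  have r: "0 \<le> r" "r \<le> 1" using idx_loc[of 5 s] k unfolding r_def by auto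
  show ?thesis
    using that[OF k(1-3) r, of ph] unfolding Rp_def Qp_def glue_def k_def s_def ph_def r_def by simp
qed

lemma RQ_ends:
  assumes "good n N w ys ctr rad" "j < n"
  shows "Rp n N w ys 0 j = w 0 j" "Qp n N w ys 0 j = w 0 j"
    "Rp n N w ys 1 j = w N j" "Qp n N w ys 1 j = w N j"
proof -
  have N: "1 \<le> N" and e: "snd (w 0 j) = 0" "snd (w N j) = 0" using assms unfolding good_def by auto
  show "Rp n N w ys 0 j = w 0 j" unfolding Rp_def using assms(2) by (simp add: glue_0 Rc_def)
  show "Qp n N w ys 0 j = w 0 j" unfolding Qp_def using assms(2) e by (simp add: glue_0 Qc_def prod_eq_iff)
  have SN: "Suc (N - 1) = N" using N by simp
  show "Rp n N w ys 1 j = w N j" unfolding Rp_def using assms(2) N SN by (simp add: glue_1 Rc_def)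
  show "Qp n N w ys 1 j = w N j" unfolding Qp_def using assms(2) N SN e by (simp add: glue_1 Qc_def prod_eq_iff)
qed

lemma bx_mem: "p \<in> bx z d \<longleftrightarrow> fst p \<in> {fst z - d <..< fst z + d} \<and> snd p \<in> {snd z - d <..< snd z + d}"
  unfolding bx_def by (cases p) auto

lemma vertices:
  fixes \<gamma> :: "real \<Rightarrow> nat \<Rightarrow> real \<times> real"
  assumes N: "1 \<le> N"
    and inbox: "\<And>k t j. k < N \<Longrightarrow> real k / real N \<le> t \<Longrightarrow> t \<le> (real k + 1) / real N \<Longrightarrow> j < n \<Longrightarrow> \<gamma> t j \<in> bx (ctr k j) (rad k)"
    and radp: "\<And>k. k < N \<Longrightarrow> 0 < rad k"
    and i0: "inj_on (\<lambda>j. fst (\<gamma> 0 j)) {..<n}" and i1: "inj_on (\<lambda>j. fst (\<gamma> 1 j)) {..<n}"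
    and e0: "\<And>j. j < n \<Longrightarrow> snd (\<gamma> 0 j) = 0 \<and> fst (\<gamma> 0 j) \<in> {-1..1}"
    and e1: "\<And>j. j < n \<Longrightarrow> snd (\<gamma> 1 j) = 0 \<and> fst (\<gamma> 1 j) \<in> {-1..1}"
  obtains w ys where "good n N w ys ctr rad" "w 0 = \<gamma> 0" "w N = \<gamma> 1"
proof -
  have Np: "0 < real N" using N by simp
  have lo: "real k / real N \<le> real k / real N" and hi: "real k / real N \<le> (real k + 1) / real N" for k
    using Np by (auto simp: divide_right_mono)
  define a where "a = (\<lambda>k j. max (fst (ctr (k - 1) j) - rad (k - 1)) (fst (ctr k j) - rad k))"
  define b where "b = (\<lambda>k j. min (fst (ctr (k - 1) j) + rad (k - 1)) (fst (ctr k j) + rad k))"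
  have vin: "a k j < fst (\<gamma> (real k / real N) j) \<and> fst (\<gamma> (real k / real N) j) < b k j \<and>
      \<gamma> (real k / real N) j \<in> bx (ctr k j) (rad k)"
    if k: "0 < k" "k < N" and j: "j < n" for k j
  proof -
    have "\<gamma> (real k / real N) j \<in> bx (ctr k j) (rad k)" using inbox[OF k(2) lo hi j] .
    moreover have "\<gamma> (real k / real N) j \<in> bx (ctr (k - 1) j) (rad (k - 1))"
    proof (rule inbox)
      show "k - 1 < N" using k by simp
      show "real (k - 1) / real N \<le> real k / real N" using Np by (simp add: divide_right_mono)
      show "real k / real N \<le> (real (k - 1) + 1) / real N" using k by (simp add: of_nat_diff)
    qed (rule j)
    ultimately show ?thesis unfolding a_def b_def bx_mem by auto
  qed
  have "\<exists>x. 0 < k \<and> k < N \<longrightarrow> inj_on x {..<n} \<and> (\<forall>j<n. a k j < x j \<and> x j < b k j)" for k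
  proof (cases "0 < k \<and> k < N")
    case True
    have "a k j < b k j" if "j < n" for j using vin[of k j] True that by linarith
    then show ?thesis using pick_distinct[of n "a k" "b k"] by blast
  qed auto
  then obtain X where X: "\<And>k. 0 < k \<Longrightarrow> k < N \<Longrightarrow> inj_on (X k) {..<n} \<and> (\<forall>j<n. a k j < X k j \<and> X k j < b k j)"
    by metis
  have "\<exists>y. k < N \<longrightarrow> inj_on y {..<n} \<and> (\<forall>j<n. snd (ctr k j) - rad k < y j \<and> y j < snd (ctr k j) + rad k)" for k
  proof (cases "k < N")
    case True
    then show ?thesis using pick_distinct[of n "\<lambda>j. snd (ctr k j) - rad k" "\<lambda>j. snd (ctr k j) + rad k"] radp[OF True] by auto
  qed simp
  then obtain Y where Y: "\<And>k. k < N \<Longrightarrow> inj_on (Y k) {..<n} \<and> (\<forall>j<n. snd (ctr k j) - rad k < Y k j \<and> Y k j < snd (ctr k j) + rad k)"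
    by metis
  define w where "w = (\<lambda>k. if k = 0 then \<gamma> 0 else if k = N then \<gamma> 1 else (\<lambda>j. (X k j, snd (\<gamma> (real k / real N) j))))"
  have w0: "w 0 = \<gamma> 0" unfolding w_def by simp
  have wN: "w N = \<gamma> 1" unfolding w_def using N by simp
  have wmid: "w k j \<in> bx (ctr k j) (rad k) \<and> w k j \<in> bx (ctr (k - 1) j) (rad (k - 1))" if k: "0 < k" "k < N" and j: "j < n" for k j
  proof -
    have wk: "w k j = (X k j, snd (\<gamma> (real k / real N) j))" unfolding w_def using k by simp
    have "\<gamma> (real k / real N) j \<in> bx (ctr (k - 1) j) (rad (k - 1))"
    proof (rule inbox)
      show "k - 1 < N" using k by simp
      show "real (k - 1) / real N \<le> real k / real N" using Np by (simp add: divide_right_mono)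
      show "real k / real N \<le> (real (k - 1) + 1) / real N" using k by (simp add: of_nat_diff)
    qed (rule j)
    then show ?thesis using vin[OF k j] X[OF k] j unfolding wk a_def b_def bx_mem by auto
  qed
  have good: "good n N w Y ctr rad"
    unfolding good_def
  proof (intro conjI allI impI)
    show "1 \<le> N" by (rule N)
  next
    fix k assume k: "k \<le> N"
    show "inj_on (\<lambda>j. fst (w k j)) {..<n}"
    proof (cases "k = 0 \<or> k = N")
      case True then show ?thesis using i0 i1 w0 wN by auto
    next
      case False
      then have "w k = (\<lambda>j. (X k j, snd (\<gamma> (real k / real N) j)))" unfolding w_def by auto
      then show ?thesis using X[of k] False k by simp
    qed
  next
    fix k assume "k < N" then show "inj_on (Y k) {..<n}" using Y by blast
  next
    fix k j assume k: "k < N" and j: "j < n"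
    show "w k j \<in> bx (ctr k j) (rad k)"
    proof (cases "k = 0")
      case True
      have "\<gamma> 0 j \<in> bx (ctr 0 j) (rad 0)" using inbox[of 0 0 j] k j Np by simp
      then show ?thesis using True w0 by simp
    qed (use wmid k j in auto)
    show "w (Suc k) j \<in> bx (ctr k j) (rad k)"
    proof (cases "Suc k = N")
      case True
      have "\<gamma> 1 j \<in> bx (ctr k j) (rad k)" using inbox[of k 1 j] k j Np True by (simp add: divide_le_eq)
      then show ?thesis using True wN by simp
    next
      case False
      then show ?thesis using wmid[of "Suc k" j] k j by simp
    qed
    show "Y k j \<in> {snd (ctr k j) - rad k<..<snd (ctr k j) + rad k}" using Y[OF k] j by auto
  next
    fix j assume j: "j < n"
    show "snd (w 0 j) = 0" "fst (w 0 j) \<in> {-1..1}" "snd (w N j) = 0" "fst (w N j) \<in> {-1..1}"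
      using e0[OF j] e1[OF j] w0 wN by auto
  qed
  then show ?thesis using that w0 wN by blast
qed

theorem mainTheorem1:
  fixes n :: nat and x0 :: "(real \<times> real) set"
  assumes "n \<ge> 1"
    and "x0 \<in> conf_T n"
    and "x0 \<subseteq> {(x, 0) | x. -1 \<le> x \<and> x \<le> 1}"
  shows "\<forall>g. pathin (conf_space n) g \<and> g 0 = x0 \<and> g 1 = x0 \<longrightarrow>
           (\<exists>h. pathin (conf_space n) h \<and> h ` {0..1} \<subseteq> conf_T n \<and>
                homotopic_with (\<lambda>k. k 0 = x0 \<and> k 1 = x0)
                  (top_of_set {0..1}) (conf_space n) g h)"
proof (intro allI impI)
  fix g assume ga: "pathin (conf_space n) g \<and> g 0 = x0 \<and> g 1 = x0"
  have g: "pathin (conf_space n) g" and g0: "g 0 = x0" and g1: "g 1 = x0" using ga by auto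
  have n: "1 \<le> n" using assms by simp
  have x0t: "x0 \<in> topspace (conf_space n)" using assms(2) unfolding conf_T_def by auto
  obtain p0 where p0: "p0 \<in> ordered_conf n" "x0 = p0 ` {..<n}" using conf_elem[OF x0t] by blast
  have p0g: "p0 ` {..<n} = g 0" using p0(2) g0 by simp
  obtain N \<gamma> ctr rad where N: "1 \<le> N"
    and cg: "\<And>j. j < n \<Longrightarrow> continuous_on {0..1} (\<lambda>t. \<gamma> t j)"
    and gt: "\<And>t. t \<in> {0..1} \<Longrightarrow> \<gamma> t \<in> ordered_conf n \<and> \<gamma> t ` {..<n} = g t"
    and gam0: "\<gamma> 0 = p0"
    and radp: "\<And>k. k < N \<Longrightarrow> 0 < rad k"
    and disj: "\<And>k i j. k < N \<Longrightarrow> i < n \<Longrightarrow> j < n \<Longrightarrow> i \<noteq> j \<Longrightarrow> bx (ctr k i) (rad k) \<inter> bx (ctr k j) (rad k) = {}"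
    and inbox: "\<And>k t j. k < N \<Longrightarrow> real k / real N \<le> t \<Longrightarrow> t \<le> (real k + 1) / real N \<Longrightarrow> j < n \<Longrightarrow> \<gamma> t j \<in> bx (ctr k j) (rad k)"
    by (rule lift_path[OF g n p0(1) p0g]) (rule that; assumption)
  have onseg: "inj_on (\<lambda>j. fst (q j)) {..<n} \<and> (\<forall>j<n. snd (q j) = 0 \<and> fst (q j) \<in> {-1..1})"
    if q: "q \<in> ordered_conf n" "q ` {..<n} = x0" for q
  proof -
    have s: "snd (q j) = 0 \<and> fst (q j) \<in> {-1..1}" if "j < n" for j
      using assms(3) q(2) that by auto
    have "inj_on q {..<n}" using q(1) unfolding ordered_conf_def by auto
    then have "inj_on (\<lambda>j. fst (q j)) {..<n}"
      using s unfolding inj_on_def by (metis prod_eq_iff lessThan_iff)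
    then show ?thesis using s by auto
  qed
  have G0: "\<gamma> 0 \<in> ordered_conf n" "\<gamma> 0 ` {..<n} = x0" using gam0 p0 by auto
  have G1: "\<gamma> 1 \<in> ordered_conf n" "\<gamma> 1 ` {..<n} = x0" using gt[of 1] g1 by auto
  have o0: "inj_on (\<lambda>j. fst (\<gamma> 0 j)) {..<n}" "\<And>j. j < n \<Longrightarrow> snd (\<gamma> 0 j) = 0 \<and> fst (\<gamma> 0 j) \<in> {-1..1}"
    using onseg[OF G0] by blast+
  have o1: "inj_on (\<lambda>j. fst (\<gamma> 1 j)) {..<n}" "\<And>j. j < n \<Longrightarrow> snd (\<gamma> 1 j) = 0 \<and> fst (\<gamma> 1 j) \<in> {-1..1}"
    using onseg[OF G1] by blast+
  obtain w ys where good: "good n N w ys ctr rad" and w0: "w 0 = \<gamma> 0" and wN: "w N = \<gamma> 1"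
    by (rule vertices[OF N inbox radp o0(1) o1(1) o0(2) o1(2)])
  define R where "R = Rp n N w ys"
  define Q where "Q = Qp n N w ys"
  have facts: "R t \<in> ordered_conf n \<and> Q t \<in> ordered_conf n \<and> compat n (R t) (Q t) \<and>
      (\<forall>j<n. Q t j \<in> T_graph) \<and> (\<forall>s\<in>{0..1}. mixc n s (\<gamma> t) (R t) \<in> ordered_conf n)"
    if t: "t \<in> {0..1}" for t
  proof -
    obtain k ph r where k: "k < N" "real k / real N \<le> t" "t \<le> (real k + 1) / real N" "0 \<le> r" "r \<le> 1"
      and eq0: "\<And>j. j < n \<Longrightarrow> Rp n N w ys t j = Rc w ys k ph r j \<and> Qp n N w ys t j = Qc n N w ys k ph r j"
      by (rule RQ_at[OF good t]) (rule that; assumption)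
    have eq: "R t j = Rc w ys k ph r j \<and> Q t j = Qc n N w ys k ph r j" if "j < n" for j
      using eq0[OF that] unfolding R_def Q_def .
    have Rbox: "R t j \<in> bx (ctr k j) (rad k)" if "j < n" for j
      using Rc_cell[OF good k(1) that k(4,5)] eq[OF that] by simp
    have ext: "R t \<in> {..<n} \<rightarrow>\<^sub>E UNIV" "Q t \<in> {..<n} \<rightarrow>\<^sub>E UNIV" unfolding R_def Q_def Rp_def Qp_def by auto
    have Rinj: "inj_on (R t) {..<n}"
    proof (rule inj_onI, rule ccontr)
      fix i j assume "i \<in> {..<n}" "j \<in> {..<n}" "R t i = R t j" "i \<noteq> j"
      then show False using Rbox[of i] Rbox[of j] disj[OF k(1), of i j] by auto
    qed
    have comp: "compat n (R t) (Q t)"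
      by (rule compat_cong[OF Qc_compat[OF good k(1) k(4,5), of ph]]) (use eq in auto)
    have "Q t \<in> ordered_conf n" unfolding ordered_conf_def using ext compat_inj[OF comp] by simp
    moreover have "R t \<in> ordered_conf n" unfolding ordered_conf_def using ext Rinj by simp
    moreover have "\<forall>j<n. Q t j \<in> T_graph" using Qc_T[OF good k(1) _ k(4,5)] eq by simp
    moreover have "\<forall>s\<in>{0..1}. mixc n s (\<gamma> t) (R t) \<in> ordered_conf n"
    proof
      fix s :: real assume s: "s \<in> {0..1}"
      show "mixc n s (\<gamma> t) (R t) \<in> ordered_conf n"
      proof (rule box_mix[where B = "\<lambda>j. bx (ctr k j) (rad k)"])
        fix j assume "j < n"
        then show "\<gamma> t j \<in> bx (ctr k j) (rad k) \<and> R t j \<in> bx (ctr k j) (rad k)"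
          using inbox[OF k(1-3)] Rbox by auto
      qed (use s disj[OF k(1)] bx_convex in auto)
    qed
    ultimately show ?thesis using comp by auto
  qed
  have ends: "R 0 j = \<gamma> 0 j" "Q 0 j = \<gamma> 0 j" "R 1 j = \<gamma> 1 j" "Q 1 j = \<gamma> 1 j" if "j < n" for j
    using RQ_ends[OF good that] w0 wN unfolding R_def Q_def by auto
  have "R 0 ` {..<n} = \<gamma> 0 ` {..<n}" using ends(1) by (intro image_cong) auto
  then have R0: "R 0 ` {..<n} = x0" using G0 by simp
  have "R 1 ` {..<n} = \<gamma> 1 ` {..<n}" using ends(3) by (intro image_cong) auto
  then have R1: "R 1 ` {..<n} = x0" using G1 by simp
  define P where "P = (\<lambda>k::real \<Rightarrow> (real \<times> real) set. k 0 = x0 \<and> k 1 = x0)"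
  have H1: "homotopic_with P (top_of_set {0..1}) (conf_space n) g (\<lambda>t. \<gamma> t ` {..<n})"
  proof (rule homotopic_with_equal)
    show "P g" unfolding P_def using g0 g1 by simp
    show "P (\<lambda>t. \<gamma> t ` {..<n})" unfolding P_def using G0 G1 by simp
    show "continuous_map (top_of_set {0..1}) (conf_space n) g" using g unfolding pathin_def by simp
    show "\<And>x. x \<in> topspace (top_of_set {0..1}) \<Longrightarrow> g x = \<gamma> x ` {..<n}" using gt by simp
  qed
  have H2: "homotopic_with P (top_of_set {0..1}) (conf_space n) (\<lambda>t. \<gamma> t ` {..<n}) (\<lambda>t. R t ` {..<n})"
    unfolding P_def
  proof (rule HL)
    show "\<And>j. j < n \<Longrightarrow> continuous_on {0..1} (\<lambda>t. R t j)" unfolding R_def using Rp_cont[OF good] .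
    show "\<And>j. j < n \<Longrightarrow> continuous_on {0..1} (\<lambda>t. \<gamma> t j)" by (rule cg)
    show "\<And>s t. s \<in> {0..1} \<Longrightarrow> t \<in> {0..1} \<Longrightarrow> mixc n s (\<gamma> t) (R t) \<in> ordered_conf n"
      using facts by blast
    show "\<And>j. j < n \<Longrightarrow> \<gamma> 0 j = R 0 j" using ends(1) by simp
    show "\<And>j. j < n \<Longrightarrow> \<gamma> 1 j = R 1 j" using ends(3) by simp
    show "\<gamma> 0 ` {..<n} = x0" by (rule G0(2))
    show "\<gamma> 1 ` {..<n} = x0" by (rule G1(2))
  qed
  have H3: "homotopic_with P (top_of_set {0..1}) (conf_space n) (\<lambda>t. R t ` {..<n}) (\<lambda>t. Q t ` {..<n})"
    unfolding P_def
  proof (rule HL)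
    show "\<And>j. j < n \<Longrightarrow> continuous_on {0..1} (\<lambda>t. R t j)" unfolding R_def using Rp_cont[OF good] .
    show "\<And>j. j < n \<Longrightarrow> continuous_on {0..1} (\<lambda>t. Q t j)" unfolding Q_def using Qp_cont[OF good] .
    show "\<And>s t. s \<in> {0..1} \<Longrightarrow> t \<in> {0..1} \<Longrightarrow> mixc n s (R t) (Q t) \<in> ordered_conf n"
    proof -
      fix s t :: real assume st: "s \<in> {0..1}" "t \<in> {0..1}"
      have "R t \<in> ordered_conf n" "compat n (R t) (Q t)" using facts[OF st(2)] by blast+
      then show "mixc n s (R t) (Q t) \<in> ordered_conf n" using compat_mix st(1) by auto
    qed
    show "\<And>j. j < n \<Longrightarrow> R 0 j = Q 0 j" using ends(1,2) by simp
    show "\<And>j. j < n \<Longrightarrow> R 1 j = Q 1 j" using ends(3,4) by simp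
  qed (use R0 R1 in auto)
  have hp: "pathin (conf_space n) (\<lambda>t. Q t ` {..<n})"
    unfolding pathin_def
  proof (rule cont_conf)
    show "\<And>j. j < n \<Longrightarrow> continuous_map (top_of_set {0..1}) euclidean (\<lambda>z. Q z j)"
      unfolding Q_def using Qp_cont[OF good] by simp
    show "\<And>z. z \<in> topspace (top_of_set {0..1}) \<Longrightarrow> Q z \<in> ordered_conf n" using facts by simp
  qed
  have hT: "(\<lambda>t. Q t ` {..<n}) ` {0..1} \<subseteq> conf_T n"
  proof
    fix S assume "S \<in> (\<lambda>t. Q t ` {..<n}) ` {0..1}"
    then obtain t where t: "t \<in> {0..1}" "S = Q t ` {..<n}" by auto
    have "Q t \<in> ordered_conf n" "\<forall>j<n. Q t j \<in> T_graph" using facts[OF t(1)] by blast+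
    then show "S \<in> conf_T n" unfolding conf_T_def topspace_conf_space using t(2) by auto
  qed
  have "homotopic_with P (top_of_set {0..1}) (conf_space n) g (\<lambda>t. Q t ` {..<n})"
    using homotopic_with_trans[OF homotopic_with_trans[OF H1 H2] H3] .
  then show "\<exists>h. pathin (conf_space n) h \<and> h ` {0..1} \<subseteq> conf_T n \<and>
                homotopic_with (\<lambda>k. k 0 = x0 \<and> k 1 = x0) (top_of_set {0..1}) (conf_space n) g h"
    using hp hT unfolding P_def by blast
qed

end
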